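(* Let $\theta>1$, $p>1$, $\varepsilon>0$, let $F(u)=\frac{1}{2\theta}|1-u^2|^{\theta}$ and, for $\beta\in\mathbb{R}$, let $G_\beta(u):=F(u)-\beta u$. Set $u_\pm:=\pm(2\theta-1)^{-1/2}$, so that $F'(u_\pm)=\mp(2\theta-1)^{1/2-\theta}(2\theta-2)^{\theta-1}$. Consider the ODE on the whole real line $$\varepsilon^p\big(|u_x|^{p-2}u_x\big)_x-G_\beta'(u)=0,\qquad x\in\mathbb{R}.$$ (i) Let $\beta\in(0,F'(u_-))$ and set $z_\beta^-:=\min\{z\in\mathbb{R}: G_\beta'(z)=0\}$. If $2<p\le\theta$, then there exists a solution $\psi_\beta$ of the ODE with $\psi_\beta(0)=\max_{\mathbb{R}}\psi_\beta=:z_\beta^+$, with $G_\beta(z_\beta^+)=G_\beta(z_\beta^-)$, and there exists $\omega_\beta>0$ such that $\psi_\beta(x)=z_\beta^-$ for all $x\in(-\infty,-\omega_\beta]\cup[\omega_\beta,+\infty)$, $\psi_\beta'>0$ in $(-\omega_\beta,0)$ and $\psi_\beta'<0$ in $(0,\omega_\beta)$. Moreover $\lim_{\beta\to0^+}z_\beta^\pm=\pm1$. (ii) Let $\beta\in(F'(u_+),0)$ and set $z_\beta^+:=\max\{z\in\mathbb{R}: G_\beta'(z)=0\}$. If $2<p\le\theta$, then there exists a solution $\psi_\beta$ of the ODE with $\psi_\beta(0)=\min_{\mathbb{R}}\psi_\beta=:z_\beta^-$, with $G_\beta(z_\beta^-)=G_\beta(z_\beta^+)$, and there exists $\omega_\beta>0$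 such that $\psi_\beta(x)=z_\beta^+$ for all $x\in(-\infty,-\omega_\beta]\cup[\omega_\beta,+\infty)$, $\psi_\beta'<0$ in $(-\omega_\beta,0)$ and $\psi_\beta'>0$ in $(0,\omega_\beta)$.
   Context: For $\beta\in(F'(u_+),F'(u_-))$ the function $G_\beta$ has exactly three critical points. The solutions $\psi_\beta$ are called pulse (homoclinic) solutions. *)

theory Defs
  imports "HOL-Analysis.Analysis"
begin

definition Fpot :: "real \<Rightarrow> real \<Rightarrow> real" where
  "Fpot \<theta> u = (1 / (2 * \<theta>)) * \<bar>1 - u\<^sup>2\<bar> powr \<theta>"

definition Gpot :: "real \<Rightarrow> real \<Rightarrow> real \<Rightarrow> real" where
  "Gpot \<theta> \<beta> u = Fpot \<theta> u - \<beta> * u"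

definition u_plus :: "real \<Rightarrow> real" where
  "u_plus \<theta> = (2 * \<theta> - 1) powr (-1/2)"

definition u_minus :: "real \<Rightarrow> real" where
  "u_minus \<theta> = - ((2 * \<theta> - 1) powr (-1/2))"

definition is_solution :: "real \<Rightarrow> real \<Rightarrow> real \<Rightarrow> real \<Rightarrow> (real \<Rightarrow> real) \<Rightarrow> bool" where
  "is_solution \<theta> p \<epsilon> \<beta> \<psi> \<longleftrightarrow>
     (\<forall>x. \<psi> differentiable (at x)) \<and>
     (\<forall>x. \<exists>D. ((\<lambda>y. \<bar>deriv \<psi> y\<bar> powr (p - 2) * deriv \<psi> y) has_real_derivative D) (at x)
              \<and> \<epsilon> powr p * D - deriv (Gpot \<theta> \<beta>) (\<psi> x) = 0)"

end

theory Submission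
  imports Defs "HOL-Analysis.Analysis"
begin



lemma powr_integrable_left:
  fixes a b r :: real
  assumes "r > -1" "a \<le> b"
  shows "(\<lambda>v. (v - a) powr r) integrable_on {a..b}"
proof -
  have "((\<lambda>v. (v - a) powr r) has_integral ((\<lambda>v. (v - a) powr (r+1) / (r+1)) b - (\<lambda>v. (v - a) powr (r+1) / (r+1)) a)) {a..b}"
  proof (rule fundamental_theorem_of_calculus_interior_strong[of "{}"])
    show "continuous_on {a..b} (\<lambda>v. (v - a) powr (r+1) / (r+1))"
      using assms by (intro continuous_intros continuous_on_powr') auto
    fix x assume x: "x \<in> {a<..<b} - {}"
    have "((\<lambda>v. (v - a) powr (r+1) / (r+1)) has_real_derivative ((r+1) * (x-a) powr (r+1 - of_nat 1) * 1) / (r+1)) (at x)"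
      using x by (intro DERIV_cdivide DERIV_fun_powr) (auto intro!: derivative_eq_intros)
    then show "((\<lambda>v. (v - a) powr (r+1) / (r+1)) has_vector_derivative (x - a) powr r) (at x)"
      using assms by (simp add: has_real_derivative_iff_has_vector_derivative[symmetric])
  qed (use assms in auto)
  then show ?thesis by blast
qed

lemma powr_integrable_right:
  fixes a b r :: real
  assumes "r > -1" "a \<le> b"
  shows "(\<lambda>v. (b - v) powr r) integrable_on {a..b}"
proof -
  have "((\<lambda>v. (b - v) powr r) has_integral ((\<lambda>v. - ((b - v) powr (r+1)) / (r+1)) b - (\<lambda>v. - ((b - v) powr (r+1)) / (r+1)) a)) {a..b}"
  proof (rule fundamental_theorem_of_calculus_interior_strong[of "{}"])
    show "continuous_on {a..b} (\<lambda>v. - ((b - v) powr (r+1)) / (r+1))"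
      using assms by (intro continuous_intros continuous_on_powr') auto
    fix x assume x: "x \<in> {a<..<b} - {}"
    have "((\<lambda>v. - ((b - v) powr (r+1)) / (r+1)) has_real_derivative (- ((r+1) * (b-x) powr (r+1 - of_nat 1) * (-1))) / (r+1)) (at x)"
      using x by (intro DERIV_cdivide DERIV_minus DERIV_fun_powr) (auto intro!: derivative_eq_intros)
    then show "((\<lambda>v. - ((b - v) powr (r+1)) / (r+1)) has_vector_derivative (b - x) powr r) (at x)"
      using assms by (simp add: has_real_derivative_iff_has_vector_derivative[symmetric])
  qed (use assms in auto)
  then show ?thesis by blast
qed




lemma f_integrable:
  fixes H h :: "real \<Rightarrow> real" and a b c p k1 d1 :: real
  assumes ab: "a < b" and Hd: "\<And>v. (H has_real_derivative h v) (at v)"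
    and hc: "continuous_on UNIV h" and Hb: "H b = 0"
    and Hpos: "\<And>v. a < v \<Longrightarrow> v < b \<Longrightarrow> H v > 0" and hb: "h b < 0"
    and k1: "k1 > 0" and d1: "d1 > 0"
    and low: "\<And>v. a \<le> v \<Longrightarrow> v \<le> a + d1 \<Longrightarrow> H v \<ge> k1 * (v - a)^2"
    and c: "c > 0" and p: "p > 2"
  shows "(\<lambda>v. (c * H v) powr (-1/p)) integrable_on {a..b}"
proof -
  have Hc: "continuous_on UNIV H"
    using Hd by (meson DERIV_isCont continuous_at_imp_continuous_on)
  have "isCont h b" using hc by (simp add: continuous_on_eq_continuous_at)
  then obtain e where e: "e > 0" "\<And>v. \<bar>v - b\<bar> < e \<Longrightarrow> \<bar>h v - h b\<bar> < - h b / 2"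
    using hb unfolding continuous_at_eps_delta dist_real_def
    by (metis half_gt_zero neg_0_less_iff_less)
  define k2 where "k2 = - h b / 2"
  have k2: "k2 > 0" using hb k2_def by simp
  have low2: "H v \<ge> k2 * (b - v)" if "b - e < v" "v \<le> b" for v
  proof (cases "v = b")
    case True then show ?thesis using Hb by simp
  next
    case False
    then have "v < b" using that by simp
    then obtain z where z: "v < z" "z < b" "H b - H v = (b - v) * h z"
      using MVT2[of v b H h] Hd by blast
    have "\<bar>z - b\<bar> < e" using z that by simp
    then have "h z < - k2" using e(2)[of z] k2_def by simp
    then have "(b - v) * h z \<le> (b - v) * (- k2)" using \<open>v < b\<close> by (intro mult_left_mono) auto
    then show ?thesis using z Hb by (simp add: algebra_simps)
  qed
  define \<delta>1 where "\<delta>1 = min d1 ((b - a)/3)"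
  define \<delta>2 where "\<delta>2 = min (e/2) ((b - a)/3)"
  have dd: "\<delta>1 \<le> (b-a)/3" "\<delta>2 \<le> (b-a)/3" unfolding \<delta>1_def \<delta>2_def by (meson min.cobounded2)+
  have d3: "\<delta>2 \<le> e/2" unfolding \<delta>2_def by (meson min.cobounded1)
  have \<delta>: "\<delta>1 > 0" "\<delta>2 > 0" "a + \<delta>1 < b - \<delta>2" "\<delta>1 \<le> d1" "\<delta>2 < e"
    subgoal using ab d1 unfolding \<delta>1_def by simp
    subgoal using ab e unfolding \<delta>2_def by simp
    subgoal using ab dd by (simp add: field_simps)
    subgoal unfolding \<delta>1_def by simp
    subgoal using e d3 by linarith
    done
  obtain x0 where x0: "x0 \<in> {a+\<delta>1..b-\<delta>2}" "\<And>y. y \<in> {a+\<delta>1..b-\<delta>2} \<Longrightarrow> H x0 \<le> H y"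
  proof -
    have "continuous_on {a+\<delta>1..b-\<delta>2} H" using continuous_on_subset[OF Hc] by blast
    moreover have "{a+\<delta>1..b-\<delta>2} \<noteq> {}" using \<delta>(3) by simp
    ultimately show ?thesis using continuous_attains_inf[of "{a+\<delta>1..b-\<delta>2}" H] that by blast
  qed
  define m where "m = H x0"
  have m: "m > 0" using x0 \<delta> Hpos unfolding m_def by auto
  define g where "g = (\<lambda>v. (c*k1) powr (-1/p) * (v - a) powr (-2/p) + (c*k2) powr (-1/p) * (b - v) powr (-1/p) + (c*m) powr (-1/p))"
  have gi: "g integrable_on {a..b}"
    unfolding g_def using p ab
    by (intro integrable_add integrable_on_cmult_left[where 'b=real, simplified] 
        powr_integrable_left powr_integrable_right integrable_const_ivl) (auto simp: divide_simps)
  have bound: "\<bar>(c * H v) powr (-1/p)\<bar> \<le> g v" if v: "v \<in> {a<..<b}" for v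
  proof -
    have Hv: "H v > 0" using v Hpos by auto
    have t1: "(c*k1) powr (-1/p) * (v - a) powr (-2/p) \<ge> 0" "(c*k2) powr (-1/p) * (b - v) powr (-1/p) \<ge> 0"
      "(c*m) powr (-1/p) \<ge> 0" by auto
    have mono: "(c * H v) powr (-1/p) \<le> (c * L) powr (-1/p)" if "0 < L" "L \<le> H v" for L
      using that c p by (intro powr_mono2') (auto simp: divide_simps)
    have "(c * H v) powr (-1/p) \<le> g v"
    proof (cases "v \<le> a + \<delta>1")
      case True
      have L: "0 < k1 * (v - a)^2" "k1 * (v - a)^2 \<le> H v" using low[of v] True v \<delta> k1 by auto
      have "(c * (k1 * (v - a)^2)) powr (-1/p) = (c*k1) powr (-1/p) * ((v - a) powr 2) powr (-1/p)"
        using c k1 v by (simp add: powr_mult mult.assoc powr_numeral)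
      also have "\<dots> = (c*k1) powr (-1/p) * (v - a) powr (-2/p)"
        by (simp add: powr_powr)
      finally show ?thesis using mono[OF L] t1 unfolding g_def by linarith
    next
      case False
      show ?thesis
      proof (cases "v \<ge> b - \<delta>2")
        case True
        have L: "0 < k2 * (b - v)" "k2 * (b - v) \<le> H v" using low2[of v] True v \<delta> k2 by auto
        have "(c * (k2 * (b - v))) powr (-1/p) = (c*k2) powr (-1/p) * (b - v) powr (-1/p)"
          using c k2 v by (simp add: powr_mult mult.assoc)
        then show ?thesis using mono[OF L] t1 unfolding g_def by linarith
      next
        case False2: False
        have L: "0 < m" "m \<le> H v" using x0(2)[of v] False False2 m unfolding m_def by auto
        show ?thesis using mono[OF L] t1 unfolding g_def by linarith
      qed
    qed
    then show ?thesis by simp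
  qed
  have fc: "continuous_on {a<..<b} (\<lambda>v. (c * H v) powr (-1/p))"
  proof (rule continuous_on_powr')
    show "continuous_on {a<..<b} (\<lambda>v. c * H v)"
      by (intro continuous_intros continuous_on_subset[OF Hc]) auto
    show "\<forall>x\<in>{a<..<b}. 0 \<le> c * H x \<and> (c * H x = 0 \<longrightarrow> 0 < -1/p)"
    proof
      fix x assume "x \<in> {a<..<b}"
      then have "c * H x > 0" using Hpos c by simp
      then show "0 \<le> c * H x \<and> (c * H x = 0 \<longrightarrow> 0 < -1/p)" by (metis less_irrefl less_imp_le)
    qed
  qed simp
  have "(\<lambda>v. (c * H v) powr (-1/p)) integrable_on {a<..<b}"
    by (rule measurable_bounded_by_integrable_imp_integrable_real[OF
          continuous_imp_measurable_on_sets_lebesgue[OF fc] _ bound])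
       (use gi integrable_on_Icc_iff_Ioo in auto)
  then show ?thesis using integrable_on_Icc_iff_Ioo by blast
qed




lemma sgn_mult_cont:
  fixes q :: "real \<Rightarrow> real"
  assumes qc: "continuous_on UNIV q" and q0: "q 0 = 0"
  shows "continuous_on UNIV (\<lambda>x. sgn x * q x)"
proof -
  have "isCont (\<lambda>x. sgn x * q x) x" for x
  proof (cases "x = 0")
    case False
    have "isCont sgn x" using isCont_sgn[where f="\<lambda>x. x" and a=x] False by simp
    then show ?thesis using qc False by (intro continuous_intros) (auto simp: continuous_on_eq_continuous_at)
  next
    case True
    have "(q \<longlongrightarrow> 0) (at 0)" using qc q0
      by (metis continuous_on_eq_continuous_at continuous_within open_UNIV UNIV_I)
    then have lim: "((\<lambda>x. \<bar>q x\<bar>) \<longlongrightarrow> 0) (at 0)" by (rule tendsto_rabs_zero)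
    moreover have bd: "norm (sgn x * q x) \<le> \<bar>q x\<bar>" for x by (cases "x = 0") (auto simp: abs_mult)
    then have ev: "eventually (\<lambda>x. norm (sgn x * q x) \<le> \<bar>q x\<bar>) (at 0)"
      by (intro always_eventually allI)
    have "((\<lambda>x. sgn x * q x) \<longlongrightarrow> 0) (at 0)"
      by (rule Lim_null_comparison[OF ev lim])
    then show ?thesis using True q0 by (simp add: isCont_def)
  qed
  then show ?thesis by (simp add: continuous_on_eq_continuous_at)
qed

lemma T_props:
  fixes f :: "real \<Rightarrow> real" and a b :: real
  assumes ab: "a < b" and fi: "f integrable_on {a..b}"
    and fc: "continuous_on {a<..<b} f" and fpos: "\<And>v. a < v \<Longrightarrow> v < b \<Longrightarrow> f v > 0"
  shows "continuous_on {a..b} (\<lambda>u. integral {u..b} f)"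
    and "\<And>u. a < u \<Longrightarrow> u < b \<Longrightarrow> ((\<lambda>u. integral {u..b} f) has_real_derivative - f u) (at u)"
    and "\<And>u u'. a \<le> u \<Longrightarrow> u < u' \<Longrightarrow> u' \<le> b \<Longrightarrow> integral {u'..b} f < integral {u..b} f"
proof -
  show Tc: "continuous_on {a..b} (\<lambda>u. integral {u..b} f)"
    by (rule indefinite_integral_continuous_1'[OF fi])
  show Td: "((\<lambda>u. integral {u..b} f) has_real_derivative - f u) (at u)" if u: "a < u" "u < b" for u
  proof -
    define u0 where "u0 = (a + u) / 2"
    define m where "m = (u + b) / 2"
    have um: "a < u0" "u0 < u" "u < m" "m < b" using u by (auto simp: u0_def m_def)
    have eq: "integral {y..b} f = integral {y..m} f + integral {m..b} f" if "u0 < y" "y < m" for y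
    proof -
      have "f integrable_on {y..b}" using fi by (rule integrable_subinterval_real) (use that um in auto)
      then show ?thesis using Henstock_Kurzweil_Integration.integral_combine[where a=y and c=m and b=b and f=f] that um by auto
    qed
    have "((\<lambda>y. integral {y..m} f) has_real_derivative - f u) (at u within {u0..m})"
      by (rule integral_has_real_derivative') (use um in \<open>auto intro: continuous_on_subset[OF fc]\<close>)
    then have "((\<lambda>y. integral {y..m} f) has_real_derivative - f u) (at u)"
      using at_within_Icc_at[of u0 u m] um by simp
    then have "((\<lambda>y. integral {y..m} f + integral {m..b} f) has_real_derivative - f u) (at u)"
      by (auto intro!: derivative_eq_intros)
    then show ?thesis
      by (rule has_field_derivative_transform_within_open[where S="{u0<..<m}"]) (use um eq in auto)
  qed
  show "integral {u'..b} f < integral {u..b} f" if "a \<le> u" "u < u'" "u' \<le> b" for u u'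
    apply (rule DERIV_neg_imp_decreasing_open[OF \<open>u < u'\<close>])
    subgoal for x
    proof -
      assume x: "u < x" "x < u'"
      have ax: "a < x" "x < b" using x that by auto
      have "((\<lambda>u. integral {u..b} f) has_real_derivative - f x) (at x)" by (rule Td) (use ax in auto)
      moreover have "- f x < 0" using fpos[OF ax] by simp
      ultimately show ?thesis by blast
    qed
    by (rule continuous_on_subset[OF Tc]) (use that in auto)
qed




lemma deriv_fill:
  fixes f g :: "real \<Rightarrow> real"
  assumes fc: "continuous_on UNIV f" and gc: "continuous_on UNIV g" and S: "finite S"
    and d: "\<And>x. x \<notin> S \<Longrightarrow> (f has_real_derivative g x) (at x)"
  shows "(f has_real_derivative g x) (at x)"
proof -
  define a where "a = x - 1"
  define b where "b = x + 1"
  have eq: "f y = f a + integral {a..y} g" if "a < y" for y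
  proof -
    have "(g has_integral (f y - f a)) {a..y}"
      apply (rule fundamental_theorem_of_calculus_interior_strong[OF S])
      using that d apply (auto simp: has_real_derivative_iff_has_vector_derivative[symmetric])
      using fc continuous_on_subset by blast
    then show ?thesis by (simp add: integral_unique)
  qed
  have "((\<lambda>y. integral {a..y} g) has_real_derivative g x) (at x within {a..b})"
    by (rule integral_has_real_derivative) (use gc continuous_on_subset a_def b_def in auto)
  then have "((\<lambda>y. integral {a..y} g) has_real_derivative g x) (at x)"
    using at_within_Icc_at[of a x b] a_def b_def by simp
  then have "((\<lambda>y. f a + integral {a..y} g) has_real_derivative g x) (at x)"
    by (auto intro!: derivative_eq_intros)
  then show ?thesis
    by (rule has_field_derivative_transform_within_open[where S="{a<..}"]) (auto simp: a_def eq)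
qed




lemma alg1: "- ((A::real) * P * (c * (k * - Q))) = A * c * k * (P * Q)" by (simp add: algebra_simps)
lemma alg2: "((A::real) * P * (c * (k * Q))) = A * c * k * (P * Q)" by (simp add: algebra_simps)

lemma pulse_core:
  fixes H h :: "real \<Rightarrow> real" and a b c p k1 d1 :: real
  assumes ab: "a < b" and Hd: "\<And>v. (H has_real_derivative h v) (at v)"
    and hc: "continuous_on UNIV h" and Ha: "H a = 0" and Hb: "H b = 0" and ha: "h a = 0"
    and Hpos: "\<And>v. a < v \<Longrightarrow> v < b \<Longrightarrow> H v > 0" and hb: "h b < 0"
    and k1: "k1 > 0" and d1: "d1 > 0"
    and low: "\<And>v. a \<le> v \<Longrightarrow> v \<le> a + d1 \<Longrightarrow> H v \<ge> k1 * (v - a)^2"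
    and c: "c > 0" and p: "p > 2"
  shows "\<exists>\<omega>>0. \<exists>\<psi>. \<psi> 0 = b \<and> (\<forall>x. \<omega> \<le> \<bar>x\<bar> \<longrightarrow> \<psi> x = a) \<and>
     (\<forall>x. \<bar>x\<bar> < \<omega> \<longrightarrow> a < \<psi> x \<and> \<psi> x \<le> b) \<and>
     (\<forall>x. 0 < \<bar>x\<bar> \<and> \<bar>x\<bar> < \<omega> \<longrightarrow> a < \<psi> x \<and> \<psi> x < b) \<and>
     (\<forall>x. (\<psi> has_real_derivative (- sgn x * (c * H (\<psi> x)) powr (1/p))) (at x)) \<and>
     (\<forall>x. ((\<lambda>y. - sgn y * (c * H (\<psi> y)) powr ((p-1)/p)) has_real_derivative ((p-1)/p * c * h (\<psi> x))) (at x))"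
proof -
  define f where "f = (\<lambda>v. (c * H v) powr (-1/p))"
  have Hc: "continuous_on UNIV H"
    using Hd by (meson DERIV_isCont continuous_at_imp_continuous_on)
  have fi: "f integrable_on {a..b}" unfolding f_def
    by (rule f_integrable[OF ab Hd hc Hb Hpos hb k1 d1 low c p])
  have cHpos: "c * H v > 0" if "a < v" "v < b" for v using Hpos[OF that] c by simp
  have fpos: "f v > 0" if "a < v" "v < b" for v
  proof -
    have "c * H v \<noteq> 0" using cHpos[OF that] by linarith
    then show ?thesis unfolding f_def using powr_gt_zero by blast
  qed
  have fc: "continuous_on {a<..<b} f"
    unfolding f_def
  proof (rule continuous_on_powr')
    show "continuous_on {a<..<b} (\<lambda>v. c * H v)"
      by (intro continuous_intros continuous_on_subset[OF Hc]) auto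
    show "\<forall>x\<in>{a<..<b}. 0 \<le> c * H x \<and> (c * H x = 0 \<longrightarrow> 0 < -1/p)"
    proof
      fix x assume "x \<in> {a<..<b}"
      then have "c * H x > 0" using cHpos by simp
      then show "0 \<le> c * H x \<and> (c * H x = 0 \<longrightarrow> 0 < -1/p)" by (metis less_irrefl less_imp_le)
    qed
  qed simp
  define T where "T = (\<lambda>u. integral {u..b} f)"
  have Tc: "continuous_on {a..b} T" and Td: "\<And>u. a < u \<Longrightarrow> u < b \<Longrightarrow> (T has_real_derivative - f u) (at u)"
    and Tm: "\<And>u u'. a \<le> u \<Longrightarrow> u < u' \<Longrightarrow> u' \<le> b \<Longrightarrow> T u' < T u"
    using T_props[OF ab fi fc fpos] unfolding T_def by auto
  have Tb: "T b = 0" unfolding T_def by simp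
  define \<omega> where "\<omega> = T a"
  have \<omega>: "\<omega> > 0" using Tm[of a b] ab Tb by (simp add: \<omega>_def)
  have injT: "inj_on T {a..b}"
  proof (rule inj_onI)
    fix x y assume "x \<in> {a..b}" "y \<in> {a..b}" "T x = T y"
    then show "x = y" using Tm[of x y] Tm[of y x] by (cases x y rule: linorder_cases) auto
  qed
  have imT: "T ` {a..b} = {0..\<omega>}"
  proof
    show "T ` {a..b} \<subseteq> {0..\<omega>}"
    proof
      fix y assume "y \<in> T ` {a..b}"
      then obtain u where u: "u \<in> {a..b}" "y = T u" by auto
      have "T b \<le> T u" using Tm[of u b] u by (cases "u = b") auto
      moreover have "T u \<le> T a" using Tm[of a u] u by (cases "u = a") auto
      ultimately show "y \<in> {0..\<omega>}" using u Tb \<omega>_def by auto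
    qed
    show "{0..\<omega>} \<subseteq> T ` {a..b}"
    proof
      fix y assume y: "y \<in> {0..\<omega>}"
      then obtain u where "a \<le> u" "u \<le> b" "T u = y"
        using IVT2'[of T b y a] Tc ab Tb \<omega>_def by auto
      then show "y \<in> T ` {a..b}" by auto
    qed
  qed
  define \<phi> where "\<phi> = inv_into {a..b} T"
  have \<phi>T: "\<phi> (T u) = u" if "u \<in> {a..b}" for u
    using inv_into_f_f[OF injT that] by (simp add: \<phi>_def)
  have T\<phi>: "T (\<phi> x) = x" if "x \<in> {0..\<omega>}" for x
    using f_inv_into_f[of x T "{a..b}"] that imT by (simp add: \<phi>_def)
  have \<phi>in: "\<phi> x \<in> {a..b}" if "x \<in> {0..\<omega>}" for x
    using inv_into_into[of x T "{a..b}"] that imT by (simp add: \<phi>_def)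
  have \<phi>c: "continuous_on {0..\<omega>} \<phi>"
    using continuous_on_inv[OF Tc compact_Icc] \<phi>T imT by auto
  have \<phi>0: "\<phi> 0 = b" using \<phi>T[of b] Tb ab by simp
  have \<phi>\<omega>: "\<phi> \<omega> = a" using \<phi>T[of a] ab \<omega>_def by simp
  have \<phi>open: "a < \<phi> x \<and> \<phi> x < b" if "0 < x" "x < \<omega>" for x
  proof -
    have x: "x \<in> {0..\<omega>}" using that by auto
    have "\<phi> x \<noteq> a" using T\<phi>[OF x] that \<omega>_def by auto
    moreover have "\<phi> x \<noteq> b" using T\<phi>[OF x] that Tb by auto
    ultimately show ?thesis using \<phi>in[OF x] by auto
  qed
  have \<phi>d: "(\<phi> has_real_derivative - ((c * H (\<phi> x)) powr (1/p))) (at x)" if x: "0 < x" "x < \<omega>" for x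
  proof -
    have der: "(T has_real_derivative - f (\<phi> x)) (at (\<phi> x))" using Td \<phi>open[OF x] by auto
    have "isCont \<phi> x"
      using continuous_on_interior[OF \<phi>c, of x] x by auto
    then have "(\<phi> has_real_derivative inverse (- f (\<phi> x))) (at x)"
    proof (intro DERIV_inverse_function[where g=\<phi> and x=x and a=0 and b=\<omega> and f=T] der x)
      show "- f (\<phi> x) \<noteq> 0" using fpos \<phi>open[OF x] by force
      show "T (\<phi> y) = y" if "0 < y" "y < \<omega>" for y using T\<phi> that by auto
    qed
    moreover have "inverse (- f (\<phi> x)) = - ((c * H (\<phi> x)) powr (1/p))"
      using cHpos \<phi>open[OF x] by (simp add: f_def powr_minus_divide powr_minus divide_inverse[symmetric])
    ultimately show ?thesis by simp
  qed

  have \<phi>md: "((\<lambda>y. \<phi> (-y)) has_real_derivative (c * H (\<phi> (-x))) powr (1/p)) (at x)"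
    if x: "-\<omega> < x" "x < 0" for x
    using DERIV_chain2[OF \<phi>d[of "-x"] DERIV_minus[OF DERIV_ident]] x by simp
  define \<psi> where "\<psi> = (\<lambda>x. \<phi> (min \<bar>x\<bar> \<omega>))"
  have \<psi>c: "continuous_on UNIV \<psi>"
    unfolding \<psi>_def
  proof (rule continuous_on_compose2[OF \<phi>c])
    show "continuous_on UNIV (\<lambda>x. min \<bar>x\<bar> \<omega>)" by (intro continuous_intros)
    show "(\<lambda>x. min \<bar>x\<bar> \<omega>) ` UNIV \<subseteq> {0..\<omega>}" using \<omega> by auto
  qed
  have \<psi>0: "\<psi> 0 = b" using \<omega> \<phi>0 by (simp add: \<psi>_def)
  have \<psi>out: "\<psi> x = a" if "\<omega> \<le> \<bar>x\<bar>" for x using that \<phi>\<omega> by (simp add: \<psi>_def min_def)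
  have \<psi>pos: "a < \<psi> x \<and> \<psi> x < b" if "0 < \<bar>x\<bar>" "\<bar>x\<bar> < \<omega>" for x
    using \<phi>open[OF that] that by (simp add: \<psi>_def min_def)
  have \<psi>in: "a < \<psi> x \<and> \<psi> x \<le> b" if "\<bar>x\<bar> < \<omega>" for x
    using \<psi>pos[of x] that \<psi>0 ab by (cases "x = 0") auto
  have \<psi>ab: "a \<le> \<psi> x \<and> \<psi> x \<le> b" for x
    using \<psi>in[of x] \<psi>out[of x] ab by (cases "\<bar>x\<bar> < \<omega>") auto
  have Hnn: "0 \<le> c * H (\<psi> x)" for x
  proof -
    have "0 \<le> H (\<psi> x)" using \<psi>ab[of x] Hpos[of "\<psi> x"] Ha Hb
      by (cases "\<psi> x = a"; cases "\<psi> x = b") (auto simp: less_le)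
    then show ?thesis using c by simp
  qed
  have cHc: "continuous_on UNIV (\<lambda>x. c * H (\<psi> x))"
    by (intro continuous_intros continuous_on_compose2[OF Hc \<psi>c]) auto
  have Vc: "continuous_on UNIV (\<lambda>x. (c * H (\<psi> x)) powr r)" if "r > 0" for r
    by (rule continuous_on_powr'[OF cHc]) (use Hnn that in auto)
  have V0: "(c * H (\<psi> 0)) powr r = 0" for r using \<psi>0 Hb by simp
  have \<psi>\<phi>: "\<psi> y = \<phi> y" if "0 < y" "y < \<omega>" for y using that by (simp add: \<psi>_def)
  have \<psi>\<phi>m: "\<psi> y = \<phi> (-y)" if "-\<omega> < y" "y < 0" for y using that by (simp add: \<psi>_def)
  have \<psi>a1: "\<psi> y = a" if "y < -\<omega>" for y using that \<psi>out[of y] by simp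
  have \<psi>a2: "\<psi> y = a" if "\<omega> < y" for y using that \<psi>out[of y] by simp
  have p0: "p > 0" "p \<noteq> 0" using p by auto
  have D1: "(\<psi> has_real_derivative (- sgn x * (c * H (\<psi> x)) powr (1/p))) (at x)" for x
  proof (rule deriv_fill[OF \<psi>c, where S="{-\<omega>, 0, \<omega>}"])
    show "continuous_on UNIV (\<lambda>x. - sgn x * (c * H (\<psi> x)) powr (1 / p))"
      using continuous_on_minus[OF sgn_mult_cont[OF Vc V0]] p0 by simp
    show "finite {-\<omega>, 0, \<omega>}" by simp
    fix x :: real assume x: "x \<notin> {-\<omega>, 0, \<omega>}"
    consider "x < -\<omega>" | "-\<omega> < x \<and> x < 0" | "0 < x \<and> x < \<omega>" | "\<omega> < x" using x by force
    then show "(\<psi> has_real_derivative (- sgn x * (c * H (\<psi> x)) powr (1/p))) (at x)"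
    proof cases
      case 1
      have "((\<lambda>y. a) has_real_derivative 0) (at x)" by simp
      then have "(\<psi> has_real_derivative 0) (at x)"
        by (rule has_field_derivative_transform_within_open[where S="{..<-\<omega>}"]) (use 1 \<psi>a1 in auto)
      then show ?thesis using \<psi>a1[of x] 1 Ha by simp
    next
      case 4
      have "((\<lambda>y. a) has_real_derivative 0) (at x)" by simp
      then have "(\<psi> has_real_derivative 0) (at x)"
        by (rule has_field_derivative_transform_within_open[where S="{\<omega><..}"]) (use 4 \<psi>a2 in auto)
      then show ?thesis using \<psi>a2[of x] 4 Ha by simp
    next
      case 3
      have "(\<psi> has_real_derivative - ((c * H (\<phi> x)) powr (1/p))) (at x)"
        by (rule has_field_derivative_transform_within_open[OF \<phi>d, where S="{0<..<\<omega>}"])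
           (use 3 \<psi>\<phi> in auto)
      then show ?thesis using \<psi>\<phi>[of x] 3 by simp
    next
      case 2
      have "(\<psi> has_real_derivative (c * H (\<phi> (-x))) powr (1/p)) (at x)"
        by (rule has_field_derivative_transform_within_open[OF \<phi>md, where S="{-\<omega><..<0}"])
           (use 2 \<psi>\<phi>m in auto)
      then show ?thesis using \<psi>\<phi>m[of x] 2 by simp
    qed
  qed
  have key: "X powr ((p-1)/p - 1) * X powr (1/p) = 1" if "X > 0" for X :: real
  proof -
    have e: "(p-1)/p - 1 + 1/p = 0" using p0 by (simp add: field_simps)
    have "X powr ((p-1)/p - 1) * X powr (1/p) = X powr ((p-1)/p - 1 + 1/p)" by (simp add: powr_add)
    also have "\<dots> = 1" using e that by simp
    finally show ?thesis .
  qed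
  have D2: "((\<lambda>y. - sgn y * (c * H (\<psi> y)) powr ((p-1)/p)) has_real_derivative ((p-1)/p * c * h (\<psi> x))) (at x)" for x
  proof (rule deriv_fill[where S="{-\<omega>, 0, \<omega>}"])
    have "(p-1)/p > 0" using p by simp
    then show "continuous_on UNIV (\<lambda>y. - sgn y * (c * H (\<psi> y)) powr ((p-1)/p))"
      using continuous_on_minus[OF sgn_mult_cont[OF Vc V0]] by simp
    show "continuous_on UNIV (\<lambda>x. (p-1)/p * c * h (\<psi> x))"
      by (intro continuous_intros continuous_on_compose2[OF hc \<psi>c]) auto
    show "finite {-\<omega>, 0, \<omega>}" by simp
    fix x :: real assume x: "x \<notin> {-\<omega>, 0, \<omega>}"
    consider "x < -\<omega>" | "-\<omega> < x \<and> x < 0" | "0 < x \<and> x < \<omega>" | "\<omega> < x" using x by force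
    then show "((\<lambda>y. - sgn y * (c * H (\<psi> y)) powr ((p-1)/p)) has_real_derivative ((p-1)/p * c * h (\<psi> x))) (at x)"
    proof cases
      case 1
      have "((\<lambda>y. 0) has_real_derivative 0) (at x)" by simp
      then have "((\<lambda>y. - sgn y * (c * H (\<psi> y)) powr ((p-1)/p)) has_real_derivative 0) (at x)"
        by (rule has_field_derivative_transform_within_open[where S="{..<-\<omega>}"]) (use 1 \<psi>a1 Ha in auto)
      then show ?thesis using \<psi>a1[of x] 1 ha by simp
    next
      case 4
      have "((\<lambda>y. 0) has_real_derivative 0) (at x)" by simp
      then have "((\<lambda>y. - sgn y * (c * H (\<psi> y)) powr ((p-1)/p)) has_real_derivative 0) (at x)"
        by (rule has_field_derivative_transform_within_open[where S="{\<omega><..}"]) (use 4 \<psi>a2 Ha in auto)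
      then show ?thesis using \<psi>a2[of x] 4 ha by simp
    next
      case 3
      define X where "X = c * H (\<phi> x)"
      have X: "X > 0" using cHpos \<phi>open 3 by (simp add: X_def)
      have "((\<lambda>y. c * H (\<phi> y)) has_real_derivative c * (h (\<phi> x) * - (X powr (1/p)))) (at x)"
        using DERIV_cmult[OF DERIV_chain2[OF Hd \<phi>d]] 3 X_def by simp
      from DERIV_minus[OF DERIV_fun_powr[OF this, of "(p-1)/p"]]
      have "((\<lambda>y. - ((c * H (\<phi> y)) powr ((p-1)/p))) has_real_derivative
          - ((p-1)/p * X powr ((p-1)/p - 1) * (c * (h (\<phi> x) * - (X powr (1/p)))))) (at x)"
        using X X_def by simp
      moreover have "- ((p-1)/p * X powr ((p-1)/p - 1) * (c * (h (\<phi> x) * - (X powr (1/p)))))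
          = (p-1)/p * c * h (\<phi> x)" unfolding alg1 key[OF X] by simp
      ultimately have "((\<lambda>y. - ((c * H (\<phi> y)) powr ((p-1)/p))) has_real_derivative (p-1)/p * c * h (\<phi> x)) (at x)"
        by metis
      then have "((\<lambda>y. - sgn y * (c * H (\<psi> y)) powr ((p-1)/p)) has_real_derivative (p-1)/p * c * h (\<phi> x)) (at x)"
        by (rule has_field_derivative_transform_within_open[where S="{0<..<\<omega>}"]) (use 3 \<psi>\<phi> in auto)
      then show ?thesis using \<psi>\<phi>[of x] 3 by simp
    next
      case 2
      define X where "X = c * H (\<phi> (-x))"
      have X: "X > 0" using cHpos \<phi>open[of "-x"] 2 by (simp add: X_def)
      have "((\<lambda>y. c * H (\<phi> (-y))) has_real_derivative c * (h (\<phi> (-x)) * (X powr (1/p)))) (at x)"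
        using DERIV_cmult[OF DERIV_chain2[OF Hd \<phi>md]] 2 X_def by simp
      from DERIV_fun_powr[OF this, of "(p-1)/p"]
      have "((\<lambda>y. (c * H (\<phi> (-y))) powr ((p-1)/p)) has_real_derivative
          ((p-1)/p * X powr ((p-1)/p - 1) * (c * (h (\<phi> (-x)) * (X powr (1/p)))))) (at x)"
        using X X_def by simp
      moreover have "((p-1)/p * X powr ((p-1)/p - 1) * (c * (h (\<phi> (-x)) * (X powr (1/p)))))
          = (p-1)/p * c * h (\<phi> (-x))" unfolding alg2 key[OF X] by simp
      ultimately have "((\<lambda>y. (c * H (\<phi> (-y))) powr ((p-1)/p)) has_real_derivative (p-1)/p * c * h (\<phi> (-x))) (at x)"
        by metis
      then have "((\<lambda>y. - sgn y * (c * H (\<psi> y)) powr ((p-1)/p)) has_real_derivative (p-1)/p * c * h (\<phi> (-x))) (at x)"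
        by (rule has_field_derivative_transform_within_open[where S="{-\<omega><..<0}"]) (use 2 \<psi>\<phi>m in auto)
      then show ?thesis using \<psi>\<phi>m[of x] 2 by simp
    qed
  qed
  show ?thesis
    by (rule exI[of _ \<omega>], rule conjI[OF \<omega>], rule exI[of _ \<psi>]) (use \<psi>0 \<psi>out \<psi>in \<psi>pos D1 D2 in auto)
qed





definition qd :: "real \<Rightarrow> real \<Rightarrow> real" where
  "qd \<theta> w = sgn w * \<bar>w\<bar> powr (\<theta> - 1)"

definition Fd :: "real \<Rightarrow> real \<Rightarrow> real" where
  "Fd \<theta> u = - u * qd \<theta> (1 - u\<^sup>2)"

lemma qd_cont: "\<theta> > 1 \<Longrightarrow> continuous_on UNIV (qd \<theta>)"
  unfolding qd_def
proof (rule sgn_mult_cont)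
  assume th: "\<theta> > 1"
  show "continuous_on UNIV (\<lambda>w. \<bar>w\<bar> powr (\<theta> - 1))"
    by (rule continuous_on_powr'[of UNIV "\<lambda>w. \<bar>w\<bar>" "\<lambda>_. \<theta> - 1"]) (use th in \<open>auto intro!: continuous_intros\<close>)
qed simp

lemma Fd_cont: "\<theta> > 1 \<Longrightarrow> continuous_on UNIV (Fd \<theta>)"
  unfolding Fd_def
  by (intro continuous_intros continuous_on_compose2[OF qd_cont]) auto

lemma abs_powr_deriv:
  fixes \<theta> :: real assumes th: "\<theta> > 1"
  shows "((\<lambda>w. \<bar>w\<bar> powr \<theta>) has_real_derivative \<theta> * qd \<theta> w) (at w)"
proof (rule deriv_fill[where S="{0}"])
  show "continuous_on UNIV (\<lambda>w. \<bar>w\<bar> powr \<theta>)"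
    by (rule continuous_on_powr'[of UNIV "\<lambda>w. \<bar>w\<bar>" "\<lambda>_. \<theta>"]) (use th in \<open>auto intro!: continuous_intros\<close>)
  show "continuous_on UNIV (\<lambda>w. \<theta> * qd \<theta> w)"
    using qd_cont[OF th] by (intro continuous_intros) auto
  fix w :: real assume "w \<notin> {0}"
  then consider "w > 0" | "w < 0" by force
  then show "((\<lambda>w. \<bar>w\<bar> powr \<theta>) has_real_derivative \<theta> * qd \<theta> w) (at w)"
  proof cases
    case 1
    have "((\<lambda>w. w powr \<theta>) has_real_derivative \<theta> * w powr (\<theta> - 1)) (at w)"
      using has_real_derivative_powr[OF 1] by simp
    then have "((\<lambda>w. \<bar>w\<bar> powr \<theta>) has_real_derivative \<theta> * w powr (\<theta> - 1)) (at w)"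
      by (rule has_field_derivative_transform_within_open[where S="{0<..}"]) (use 1 in auto)
    then show ?thesis using 1 by (simp add: qd_def)
  next
    case 2
    have "((\<lambda>w. (- w) powr \<theta>) has_real_derivative \<theta> * (- w) powr (\<theta> - of_nat 1) * (-1)) (at w)"
      by (rule DERIV_fun_powr) (use 2 in \<open>auto intro!: derivative_eq_intros\<close>)
    then have "((\<lambda>w. \<bar>w\<bar> powr \<theta>) has_real_derivative \<theta> * (- w) powr (\<theta> - of_nat 1) * (-1)) (at w)"
      by (rule has_field_derivative_transform_within_open[where S="{..<0}"]) (use 2 in auto)
    then show ?thesis using 2 by (simp add: qd_def)
  qed
qed simp

lemma Fpot_deriv:
  assumes th: "\<theta> > 1"
  shows "(Fpot \<theta> has_real_derivative Fd \<theta> u) (at u)"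
proof -
  have "((\<lambda>u. (1 / (2 * \<theta>)) * \<bar>1 - u\<^sup>2\<bar> powr \<theta>) has_real_derivative
        (1 / (2 * \<theta>)) * (\<theta> * qd \<theta> (1 - u\<^sup>2) * (- (2 * u)))) (at u)"
    by (intro DERIV_cmult DERIV_chain2[OF abs_powr_deriv[OF th]]) (auto intro!: derivative_eq_intros)
  moreover have "(1 / (2 * \<theta>)) * (\<theta> * qd \<theta> (1 - u\<^sup>2) * (- (2 * u))) = Fd \<theta> u"
    using th by (simp add: Fd_def field_simps)
  ultimately show ?thesis unfolding Fpot_def[abs_def] by simp
qed

lemma Gpot_deriv:
  assumes th: "\<theta> > 1"
  shows "(Gpot \<theta> \<beta> has_real_derivative Fd \<theta> u - \<beta>) (at u)"
  unfolding Gpot_def[abs_def]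
  by (rule derivative_eq_intros Fpot_deriv[OF th] | simp)+

lemma deriv_Gpot: "\<theta> > 1 \<Longrightarrow> deriv (Gpot \<theta> \<beta>) u = Fd \<theta> u - \<beta>"
  by (rule DERIV_imp_deriv[OF Gpot_deriv])

lemma deriv_Fpot: "\<theta> > 1 \<Longrightarrow> deriv (Fpot \<theta>) u = Fd \<theta> u"
  by (rule DERIV_imp_deriv[OF Fpot_deriv])

lemma Fd_odd: "Fd \<theta> (- u) = - Fd \<theta> u" by (simp add: Fd_def)
lemma Fpot_even: "Fpot \<theta> (- u) = Fpot \<theta> u" by (simp add: Fpot_def)
lemma Fpot_nonneg: "\<theta> > 0 \<Longrightarrow> Fpot \<theta> u \<ge> 0" by (simp add: Fpot_def)




definition Fdd :: "real \<Rightarrow> real \<Rightarrow> real" where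
  "Fdd \<theta> u = (1 - u\<^sup>2) powr (\<theta> - 2) * ((2*\<theta> - 1) * u\<^sup>2 - 1)"

lemma Fd_inside: "\<bar>u\<bar> < 1 \<Longrightarrow> Fd \<theta> u = - u * (1 - u\<^sup>2) powr (\<theta> - 1)"
proof -
  assume "\<bar>u\<bar> < 1"
  then have "1 - u\<^sup>2 > 0" by (simp add: abs_square_less_1)
  then show ?thesis by (simp add: Fd_def qd_def)
qed

lemma Fd_outside: "1 < u \<Longrightarrow> Fd \<theta> u = u * (u\<^sup>2 - 1) powr (\<theta> - 1)"
proof -
  assume u: "1 < u"
  then have "1 < u\<^sup>2" by (simp add: less_1_mult power2_eq_square)
  then have "1 - u\<^sup>2 < 0" by simp
  then show ?thesis by (simp add: Fd_def qd_def abs_if)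
qed

lemma Fd_deriv_inside:
  assumes th: "\<theta> > 1" and u: "\<bar>u\<bar> < 1"
  shows "(Fd \<theta> has_real_derivative Fdd \<theta> u) (at u)"
proof -
  have X: "1 - u\<^sup>2 > 0" using u by (simp add: abs_square_less_1)
  have d1: "((\<lambda>u. 1 - u\<^sup>2) has_real_derivative - (2 * u)) (at u)" by (auto intro!: derivative_eq_intros)
  have "((\<lambda>u. - u * (1 - u\<^sup>2) powr (\<theta> - 1)) has_real_derivative
      (-1) * (1 - u\<^sup>2) powr (\<theta> - 1) + ((\<theta> - 1) * (1 - u\<^sup>2) powr (\<theta> - 1 - of_nat 1) * (- (2 * u))) * (- u)) (at u)"
    by (rule DERIV_mult[OF DERIV_minus[OF DERIV_ident] DERIV_fun_powr[OF d1 X]])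
  moreover have "(-1) * (1 - u\<^sup>2) powr (\<theta> - 1) + ((\<theta> - 1) * (1 - u\<^sup>2) powr (\<theta> - 1 - of_nat 1) * (- (2 * u))) * (- u)
      = Fdd \<theta> u"
  proof -
    have "(1 - u\<^sup>2) powr (\<theta> - 1) = (1 - u\<^sup>2) powr (\<theta> - 2) * (1 - u\<^sup>2)"
      using X powr_add[of "1 - u\<^sup>2" "\<theta> - 2" 1] by simp
    then show ?thesis unfolding Fdd_def by (simp add: algebra_simps power2_eq_square)
  qed
  ultimately have "((\<lambda>u. - u * (1 - u\<^sup>2) powr (\<theta> - 1)) has_real_derivative Fdd \<theta> u) (at u)" by metis
  then show ?thesis
    by (rule has_field_derivative_transform_within_open[where S="{-1<..<1}"]) (use u Fd_inside in auto)
qed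

lemma um_facts:
  assumes th: "\<theta> > 1"
  shows "(u_minus \<theta>)\<^sup>2 = 1 / (2*\<theta> - 1)" "u_minus \<theta> < 0" "-1 < u_minus \<theta>" "u_plus \<theta> = - u_minus \<theta>"
proof -
  have pos: "2*\<theta> - 1 > 1" using th by simp
  have "(u_minus \<theta>)\<^sup>2 = ((2*\<theta> - 1) powr (-1/2))\<^sup>2" by (simp add: u_minus_def)
  also have "\<dots> = (2*\<theta> - 1) powr (-1)" using pos by (simp add: power2_eq_square powr_add[symmetric])
  also have "\<dots> = 1 / (2*\<theta> - 1)" using pos by (simp add: powr_minus divide_inverse)
  finally show sq: "(u_minus \<theta>)\<^sup>2 = 1 / (2*\<theta> - 1)" .
  show "u_minus \<theta> < 0" using pos by (simp add: u_minus_def)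
  have "(u_minus \<theta>)\<^sup>2 < 1" using sq pos by simp
  then show "-1 < u_minus \<theta>" using \<open>u_minus \<theta> < 0\<close> by (simp add: abs_square_less_1)
  show "u_plus \<theta> = - u_minus \<theta>" by (simp add: u_plus_def u_minus_def)
qed

lemma Fdd_pos:
  assumes th: "\<theta> > 1" and u: "-1 < u" "u < u_minus \<theta>"
  shows "Fdd \<theta> u > 0"
proof -
  note um = um_facts[OF th]
  define m where "m = u_minus \<theta>"
  have "(u - m) * (u + m) > 0" using u um by (intro mult_neg_neg) (auto simp: m_def)
  then have "m\<^sup>2 < u\<^sup>2" by (simp add: power2_eq_square algebra_simps)
  then have "(2*\<theta> - 1) * m\<^sup>2 < (2*\<theta> - 1) * u\<^sup>2" using th by simp
  then have "1 < (2*\<theta> - 1) * u\<^sup>2" using um(1) th by (simp add: m_def)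
  moreover have "\<bar>u\<bar> < 1" using u um by auto
  then have "1 - u\<^sup>2 > 0" by (simp add: abs_square_less_1)
  ultimately show ?thesis unfolding Fdd_def by (simp add: powr_gt_zero)
qed

lemma Fdd_neg:
  assumes th: "\<theta> > 1" and u: "u_minus \<theta> < u" "u < 0"
  shows "Fdd \<theta> u < 0"
proof -
  note um = um_facts[OF th]
  define m where "m = u_minus \<theta>"
  have "(u - m) * (u + m) < 0" using u um by (intro mult_pos_neg) (auto simp: m_def)
  then have "u\<^sup>2 < m\<^sup>2" by (simp add: power2_eq_square algebra_simps)
  then have "(2*\<theta> - 1) * u\<^sup>2 < (2*\<theta> - 1) * m\<^sup>2" using th by simp
  then have "(2*\<theta> - 1) * u\<^sup>2 < 1" using um(1) th by (simp add: m_def)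
  moreover have "\<bar>u\<bar> < 1" using u um by auto
  then have "1 - u\<^sup>2 > 0" by (simp add: abs_square_less_1)
  ultimately show ?thesis unfolding Fdd_def by (simp add: powr_gt_zero mult_pos_neg)
qed

lemma Fd_incr:
  assumes th: "\<theta> > 1" and xy: "-1 \<le> x" "x < y" "y \<le> u_minus \<theta>"
  shows "Fd \<theta> x < Fd \<theta> y"
proof (rule DERIV_pos_imp_increasing_open[OF xy(2)])
  fix t assume t: "x < t" "t < y"
  have "\<bar>t\<bar> < 1" using t xy um_facts[OF th] by auto
  then show "\<exists>d. (Fd \<theta> has_real_derivative d) (at t) \<and> d > 0"
    using Fd_deriv_inside[OF th, of t] Fdd_pos[OF th, of t] t xy by (intro exI[of _ "Fdd \<theta> t"]) auto
qed (rule continuous_on_subset[OF Fd_cont[OF th]], simp)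

lemma Fd_decr:
  assumes th: "\<theta> > 1" and xy: "u_minus \<theta> \<le> x" "x < y" "y \<le> 0"
  shows "Fd \<theta> y < Fd \<theta> x"
proof (rule DERIV_neg_imp_decreasing_open[OF xy(2)])
  fix t assume t: "x < t" "t < y"
  have "\<bar>t\<bar> < 1" using t xy um_facts[OF th] by auto
  then show "\<exists>d. (Fd \<theta> has_real_derivative d) (at t) \<and> d < 0"
    using Fd_deriv_inside[OF th, of t] Fdd_neg[OF th, of t] t xy by (intro exI[of _ "Fdd \<theta> t"]) auto
qed (rule continuous_on_subset[OF Fd_cont[OF th]], simp)

lemma Fd_incr_out:
  assumes th: "\<theta> > 1" and xy: "1 \<le> x" "x < y"
  shows "Fd \<theta> x < Fd \<theta> y"
proof -
  have y1: "1 < y" using xy by simp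
  have x2: "x\<^sup>2 \<le> y\<^sup>2" using xy by (intro power_mono) auto
  have x1: "1 \<le> x\<^sup>2" using xy(1) by (rule one_le_power)
  have A: "(x\<^sup>2 - 1) powr (\<theta> - 1) \<le> (y\<^sup>2 - 1) powr (\<theta> - 1)"
    by (rule powr_mono2) (use th x1 x2 in linarith)+
  have "1 < y\<^sup>2" using y1 by (simp add: less_1_mult power2_eq_square)
  then have B: "(y\<^sup>2 - 1) powr (\<theta> - 1) > 0" by simp
  have Fx: "Fd \<theta> x = x * (x\<^sup>2 - 1) powr (\<theta> - 1)"
  proof (cases "x = 1")
    case True then show ?thesis by (simp add: Fd_def qd_def)
  next
    case False then show ?thesis using Fd_outside xy by simp
  qed
  have "x * (x\<^sup>2 - 1) powr (\<theta> - 1) \<le> x * (y\<^sup>2 - 1) powr (\<theta> - 1)"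
    using A xy by (intro mult_left_mono) auto
  also have "\<dots> < y * (y\<^sup>2 - 1) powr (\<theta> - 1)" using B xy by simp
  finally show ?thesis using Fx Fd_outside[OF y1] by simp
qed

lemma Fd_pos_region:
  assumes "Fd \<theta> u > 0"
  shows "(-1 < u \<and> u < 0) \<or> 1 < u"
proof (rule ccontr)
  assume "\<not> ?thesis"
  then consider "u \<le> -1" | "0 \<le> u \<and> u \<le> 1" by force
  then show False
  proof cases
    case 1
    then have "1 \<le> (-u)^2" by (intro one_le_power) auto
    then have "1 \<le> u\<^sup>2" by simp
    then have "qd \<theta> (1 - u\<^sup>2) \<le> 0" by (auto simp: qd_def sgn_if)
    then show False using assms 1 mult_nonpos_nonpos[of u "qd \<theta> (1 - u\<^sup>2)"] by (simp add: Fd_def)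
  next
    case 2
    then have "u\<^sup>2 \<le> 1" by (simp add: power_le_one)
    then have "qd \<theta> (1 - u\<^sup>2) \<ge> 0" by (auto simp: qd_def sgn_if)
    then have "0 \<le> u * qd \<theta> (1 - u\<^sup>2)" using 2 by simp
    then show False using assms by (simp add: Fd_def)
  qed
qed

lemma Fd_big: "\<theta> > 1 \<Longrightarrow> \<beta> > 0 \<Longrightarrow> Fd \<theta> (2 + \<beta>) > \<beta>"
proof -
  assume th: "\<theta> > 1" and b: "\<beta> > 0"
  define u where "u = 2 + \<beta>"
  have u: "1 < u" "2 \<le> u" using b by (auto simp: u_def)
  have "4 \<le> u\<^sup>2" using u power_mono[of 2 u 2] by simp
  then have "1 \<le> (u\<^sup>2 - 1) powr (\<theta> - 1)" using th by (intro ge_one_powr_ge_zero) auto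
  then have "u \<le> u * (u\<^sup>2 - 1) powr (\<theta> - 1)" using u by simp
  then show ?thesis using Fd_outside[OF u(1)] by (simp add: u_def)
qed




lemma Fd_special: "Fd \<theta> (-1) = 0" "Fd \<theta> 0 = 0" "Fd \<theta> 1 = 0"
  by (simp_all add: Fd_def qd_def)

lemma roots:
  assumes th: "\<theta> > 1" and b: "0 < \<beta>" "\<beta> < Fd \<theta> (u_minus \<theta>)"
  obtains z1 z2 z3 where "-1 < z1" "z1 < u_minus \<theta>" "u_minus \<theta> < z2" "z2 < 0" "1 < z3"
    "Fd \<theta> z1 = \<beta>" "Fd \<theta> z2 = \<beta>" "Fd \<theta> z3 = \<beta>"
    "{z. Fd \<theta> z = \<beta>} = {z1, z2, z3}"
    "\<And>s. z1 < s \<Longrightarrow> s < z2 \<Longrightarrow> Fd \<theta> s > \<beta>"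
    "\<And>s. z2 < s \<Longrightarrow> s < z3 \<Longrightarrow> Fd \<theta> s < \<beta>"
proof -
  define um where "um = u_minus \<theta>"
  note umf = um_facts[OF th, folded um_def]
  have Fc: "continuous_on {x..y} (Fd \<theta>)" for x y by (rule continuous_on_subset[OF Fd_cont[OF th]]) simp
  obtain z1 where z1: "-1 \<le> z1" "z1 \<le> um" "Fd \<theta> z1 = \<beta>"
    using IVT'[of "Fd \<theta>" "-1" \<beta> um] Fc Fd_special b umf by (auto simp: um_def)
  have z1': "-1 < z1" "z1 < um" using z1 b Fd_special unfolding um_def
    by (metis order_le_less less_irrefl)+
  obtain z2 where z2: "um \<le> z2" "z2 \<le> 0" "Fd \<theta> z2 = \<beta>"
    using IVT2'[of "Fd \<theta>" 0 \<beta> um] Fc Fd_special b umf by (auto simp: um_def)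
  have z2': "um < z2" "z2 < 0" using z2 b Fd_special unfolding um_def
    by (metis order_le_less less_irrefl)+
  obtain z3 where z3: "1 \<le> z3" "z3 \<le> 2 + \<beta>" "Fd \<theta> z3 = \<beta>"
    using IVT'[of "Fd \<theta>" 1 \<beta> "2 + \<beta>"] Fc Fd_special b Fd_big[OF th b(1)] by auto
  have z3': "1 < z3" using z3 b Fd_special by (metis order_le_less less_irrefl)
  have eq1: "z = z1" if "-1 \<le> z" "z \<le> um" "Fd \<theta> z = \<beta>" for z
    using Fd_incr[OF th, of z z1] Fd_incr[OF th, of z1 z] that z1 unfolding um_def
    by (cases z z1 rule: linorder_cases) auto
  have eq2: "z = z2" if "um \<le> z" "z \<le> 0" "Fd \<theta> z = \<beta>" for z
    using Fd_decr[OF th, of z z2] Fd_decr[OF th, of z2 z] that z2 unfolding um_def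
    by (cases z z2 rule: linorder_cases) auto
  have eq3: "z = z3" if "1 \<le> z" "Fd \<theta> z = \<beta>" for z
    using Fd_incr_out[OF th, of z z3] Fd_incr_out[OF th, of z3 z] that z3
    by (cases z z3 rule: linorder_cases) auto
  have set: "{z. Fd \<theta> z = \<beta>} = {z1, z2, z3}"
  proof
    show "{z1, z2, z3} \<subseteq> {z. Fd \<theta> z = \<beta>}" using z1 z2 z3 by auto
    show "{z. Fd \<theta> z = \<beta>} \<subseteq> {z1, z2, z3}"
    proof
      fix z assume "z \<in> {z. Fd \<theta> z = \<beta>}"
      then have z: "Fd \<theta> z = \<beta>" by simp
      then have "(-1 < z \<and> z < 0) \<or> 1 < z" using Fd_pos_region b by auto
      then show "z \<in> {z1, z2, z3}"
      proof (elim disjE conjE)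
        assume "-1 < z" "z < 0"
        then show ?thesis using eq1[of z] eq2[of z] z by (cases "z \<le> um") auto
      next
        assume "1 < z" then show ?thesis using eq3[of z] z by auto
      qed
    qed
  qed
  have s1: "Fd \<theta> s > \<beta>" if "z1 < s" "s < z2" for s
  proof (cases "s \<le> um")
    case True then show ?thesis using Fd_incr[OF th, of z1 s] that z1 z1' unfolding um_def by auto
  next
    case False then show ?thesis using Fd_decr[OF th, of s z2] that z2 unfolding um_def by auto
  qed
  have s2: "Fd \<theta> s < \<beta>" if "z2 < s" "s < z3" for s
  proof -
    consider "s \<le> 0" | "0 < s \<and> s < 1" | "1 \<le> s" by force
    then show ?thesis
    proof cases
      case 1 then show ?thesis using Fd_decr[OF th, of z2 s] that z2 unfolding um_def by auto
    next
      case 2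
      have "\<not> Fd \<theta> s > 0" using Fd_pos_region[of \<theta> s] 2 by auto
      then show ?thesis using b by auto
    next
      case 3 then show ?thesis using Fd_incr_out[OF th, of s z3] that z3 by auto
    qed
  qed
  show ?thesis
    by (rule that[OF z1'(1) z1'(2)[unfolded um_def] z2'(1)[unfolded um_def] z2'(2) z3' z1(3) z2(3) z3(3) set s1 s2])
qed

lemma quad_low:
  fixes H h :: "real \<Rightarrow> real"
  assumes Hd: "\<And>v. (H has_real_derivative h v) (at v)" and Ha: "H a = 0" and k: "k > 0"
    and hk: "\<And>s. a \<le> s \<Longrightarrow> s \<le> a + d \<Longrightarrow> h s \<ge> k * (s - a)"
    and v: "a \<le> v" "v \<le> a + d"
  shows "H v \<ge> k/2 * (v - a)\<^sup>2"
proof (cases "v = a")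
  case True then show ?thesis using Ha by simp
next
  case False
  then have av: "a < v" using v by simp
  define D where "D = (\<lambda>t. H t - k/2 * (t - a)\<^sup>2)"
  have Dd: "(D has_real_derivative h t - k * (t - a)) (at t)" for t
    unfolding D_def by (auto intro!: derivative_eq_intros Hd)
  obtain z where z: "a < z" "z < v" "D v - D a = (v - a) * (h z - k * (z - a))"
    using MVT2[OF av, of D "\<lambda>t. h t - k * (t - a)"] Dd by blast
  have "h z - k * (z - a) \<ge> 0" using hk[of z] z v by simp
  then have "D v - D a \<ge> 0" using z av by simp
  then show ?thesis using Ha by (simp add: D_def)
qed




lemma flux_id:
  fixes X p y :: real
  assumes X: "X \<ge> 0" and p: "p > 2"
  shows "\<bar>- sgn y * X powr (1/p)\<bar> powr (p-2) * (- sgn y * X powr (1/p)) = - sgn y * X powr ((p-1)/p)"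
proof (cases "y = 0 \<or> X = 0")
  case True then show ?thesis by auto
next
  case False
  then have X0: "X > 0" and y0: "y \<noteq> 0" using X by auto
  have s: "\<bar>- sgn y\<bar> = 1" using y0 by (simp add: abs_sgn)
  have "\<bar>- sgn y * X powr (1/p)\<bar> = X powr (1/p)" using s X0 by (simp add: abs_mult)
  moreover have "(X powr (1/p)) powr (p-2) * X powr (1/p) = X powr ((p-1)/p)"
  proof -
    have "(X powr (1/p)) powr (p-2) * X powr (1/p) = X powr ((p-2)/p + 1/p)"
      by (simp add: powr_powr powr_add)
    also have "(p-2)/p + 1/p = (p-1)/p" using p by (simp add: field_simps)
    finally show ?thesis .
  qed
  ultimately show ?thesis by (simp add: algebra_simps)
qed

lemma pulse_i:
  fixes \<theta> p \<epsilon> \<beta> z1 z2 z3 :: real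
  assumes th: "\<theta> > 1" and p: "2 < p" and ep: "\<epsilon> > 0" and b: "0 < \<beta>"
    and z: "-1 < z1" "z1 < u_minus \<theta>" "u_minus \<theta> < z2" "z2 < 0" "1 < z3"
      "Fd \<theta> z1 = \<beta>" "Fd \<theta> z2 = \<beta>" "Fd \<theta> z3 = \<beta>"
    and s1: "\<And>s. z1 < s \<Longrightarrow> s < z2 \<Longrightarrow> Fd \<theta> s > \<beta>"
    and s2: "\<And>s. z2 < s \<Longrightarrow> s < z3 \<Longrightarrow> Fd \<theta> s < \<beta>"
  shows "\<exists>\<psi>. is_solution \<theta> p \<epsilon> \<beta> \<psi> \<and> (\<forall>x. \<psi> x \<le> \<psi> 0) \<and> Gpot \<theta> \<beta> (\<psi> 0) = Gpot \<theta> \<beta> z1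
     \<and> z2 < \<psi> 0 \<and> \<psi> 0 < z3 \<and>
     (\<exists>\<omega>>0. (\<forall>x. \<omega> \<le> \<bar>x\<bar> \<longrightarrow> \<psi> x = z1) \<and> (\<forall>x\<in>{-\<omega><..<0}. deriv \<psi> x > 0) \<and>
        (\<forall>x\<in>{0<..<\<omega>}. deriv \<psi> x < 0))"
proof -
  define G where "G = Gpot \<theta> \<beta>"
  have Gd: "(G has_real_derivative Fd \<theta> v - \<beta>) (at v)" for v unfolding G_def by (rule Gpot_deriv[OF th])
  have Gc: "continuous_on S G" for S
    using Gd by (meson DERIV_isCont continuous_at_imp_continuous_on)
  have Ginc: "G x < G y" if "z1 \<le> x" "x < y" "y \<le> z2" for x y
  proof (rule DERIV_pos_imp_increasing_open[OF \<open>x < y\<close> _ Gc])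
    fix t assume "x < t" "t < y"
    then show "\<exists>d. (G has_real_derivative d) (at t) \<and> d > 0"
      using Gd[of t] s1[of t] that by (intro exI[of _ "Fd \<theta> t - \<beta>"]) auto
  qed
  have Gdec: "G y < G x" if "z2 \<le> x" "x < y" "y \<le> z3" for x y
  proof (rule DERIV_neg_imp_decreasing_open[OF \<open>x < y\<close> _ Gc])
    fix t assume "x < t" "t < y"
    then show "\<exists>d. (G has_real_derivative d) (at t) \<and> d < 0"
      using Gd[of t] s2[of t] that by (intro exI[of _ "Fd \<theta> t - \<beta>"]) auto
  qed
  have G3: "G z3 < G z1"
  proof -
    obtain \<xi> where \<xi>: "1 < \<xi>" "\<xi> < z3" "Fpot \<theta> z3 - Fpot \<theta> 1 = (z3 - 1) * Fd \<theta> \<xi>"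
      using MVT2[OF z(5), of "Fpot \<theta>" "Fd \<theta>"] Fpot_deriv[OF th] by blast
    have "Fd \<theta> \<xi> < \<beta>" using Fd_incr_out[OF th, of \<xi> z3] \<xi> z by simp
    then have "(z3 - 1) * Fd \<theta> \<xi> < (z3 - 1) * \<beta>" using z by simp
    moreover have "Fpot \<theta> 1 = 0" by (simp add: Fpot_def)
    ultimately have "Fpot \<theta> z3 < (z3 - 1) * \<beta>" using \<xi> by simp
    moreover have "Fpot \<theta> z1 \<ge> 0" using th Fpot_nonneg by simp
    moreover have "- \<beta> * z1 > 0" using b z um_facts[OF th] by (simp add: mult_pos_neg)
    ultimately show ?thesis unfolding G_def Gpot_def using b by (simp add: algebra_simps)
  qed
  have z12: "z1 < z2" using z by simp
  have G2: "G z1 < G z2" using Ginc[of z1 z2] z12 by simp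
  obtain zp where zp0: "z2 \<le> zp" "zp \<le> z3" "G zp = G z1"
    using IVT2'[of G z3 "G z1" z2] G2 G3 Gc z by force
  have zp: "z2 < zp" "zp < z3" using zp0 G2 G3 by (auto simp: order_le_less)
  define H where "H = (\<lambda>v. G v - G z1)"
  define h where "h = (\<lambda>v. Fd \<theta> v - \<beta>)"
  have Hd: "(H has_real_derivative h v) (at v)" for v
    unfolding H_def h_def using Gd by (auto intro!: derivative_eq_intros)
  have hc: "continuous_on UNIV h" unfolding h_def using Fd_cont[OF th] by (intro continuous_intros) auto
  have Hpos: "H v > 0" if "z1 < v" "v < zp" for v
  proof (cases "v \<le> z2")
    case True then show ?thesis using Ginc[of z1 v] that by (simp add: H_def)
  next
    case False then show ?thesis using Gdec[of v zp] that zp zp0 by (simp add: H_def)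
  qed
  have hb: "h zp < 0" using s2[OF zp] by (simp add: h_def)
  have ha: "h z1 = 0" using z by (simp add: h_def)
  define um where "um = u_minus \<theta>"
  define m where "m = (z1 + um) / 2"
  have m: "z1 < m" "m < um" using z by (auto simp: m_def um_def)
  have um1: "-1 < um" "um < 0" using um_facts[OF th] by (auto simp: um_def)
  have inside: "\<bar>t\<bar> < 1" if "z1 \<le> t" "t \<le> m" for t using that m um1 z by auto
  have A: "continuous_on {z1..m} (\<lambda>u. (1 - u\<^sup>2) powr (\<theta> - 2))"
  proof (rule continuous_on_powr')
    show "\<forall>x\<in>{z1..m}. 0 \<le> 1 - x\<^sup>2 \<and> (1 - x\<^sup>2 = 0 \<longrightarrow> 0 < \<theta> - 2)"
    proof
      fix x assume "x \<in> {z1..m}"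
      then have "\<bar>x\<bar> < 1" using inside by auto
      then have "1 - x\<^sup>2 > 0" by (simp add: abs_square_less_1)
      then show "0 \<le> 1 - x\<^sup>2 \<and> (1 - x\<^sup>2 = 0 \<longrightarrow> 0 < \<theta> - 2)" by simp
    qed
  qed (auto intro!: continuous_intros)
  have Fddc: "continuous_on {z1..m} (Fdd \<theta>)"
    unfolding Fdd_def[abs_def] by (intro continuous_on_mult A) (auto intro!: continuous_intros)
  obtain t0 where t0: "t0 \<in> {z1..m}" "\<And>t. t \<in> {z1..m} \<Longrightarrow> Fdd \<theta> t0 \<le> Fdd \<theta> t"
    using continuous_attains_inf[OF compact_Icc _ Fddc] m by fastforce
  define k where "k = Fdd \<theta> t0"
  have k: "k > 0" unfolding k_def using t0(1) m z by (intro Fdd_pos[OF th]) (auto simp: um_def)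
  have hk: "h s \<ge> k * (s - z1)" if "z1 \<le> s" "s \<le> z1 + (m - z1)" for s
  proof (cases "s = z1")
    case True then show ?thesis using ha by simp
  next
    case False
    then have zs: "z1 < s" using that by simp
    obtain \<xi> where \<xi>: "z1 < \<xi>" "\<xi> < s" "Fd \<theta> s - Fd \<theta> z1 = (s - z1) * Fdd \<theta> \<xi>"
    proof -
      have "(Fd \<theta> has_real_derivative Fdd \<theta> t) (at t)" if "z1 \<le> t" "t \<le> s" for t
      proof (rule Fd_deriv_inside[OF th], rule inside)
        show "z1 \<le> t" by fact
        show "t \<le> m" using that \<open>s \<le> z1 + (m - z1)\<close> by simp
      qed
      from MVT2[OF zs this] show ?thesis using that by blast
    qed
    have "k \<le> Fdd \<theta> \<xi>" using t0(2)[of \<xi>] \<xi> that unfolding k_def by auto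
    then have "(s - z1) * k \<le> (s - z1) * Fdd \<theta> \<xi>" using zs by simp
    then show ?thesis using \<xi> z by (simp add: h_def algebra_simps)
  qed
  have low: "H v \<ge> k/2 * (v - z1)\<^sup>2" if "z1 \<le> v" "v \<le> z1 + (m - z1)" for v
    by (rule quad_low[OF Hd _ k hk that]) (simp_all add: H_def)
  define c where "c = p / ((p - 1) * \<epsilon> powr p)"
  have c: "c > 0" using p ep by (simp add: c_def)
  have k2: "k/2 > 0" using k by simp
  have d: "m - z1 > 0" using m by simp
  have z1zp: "z1 < zp" using z12 zp by simp
  obtain \<omega> \<psi> where \<omega>: "\<omega> > 0" and \<psi>0: "\<psi> 0 = zp" and \<psi>out: "\<forall>x. \<omega> \<le> \<bar>x\<bar> \<longrightarrow> \<psi> x = z1"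
    and \<psi>in: "\<forall>x. \<bar>x\<bar> < \<omega> \<longrightarrow> z1 < \<psi> x \<and> \<psi> x \<le> zp"
    and \<psi>pos: "\<forall>x. 0 < \<bar>x\<bar> \<and> \<bar>x\<bar> < \<omega> \<longrightarrow> z1 < \<psi> x \<and> \<psi> x < zp"
    and D1: "\<forall>x. (\<psi> has_real_derivative (- sgn x * (c * H (\<psi> x)) powr (1/p))) (at x)"
    and D2: "\<forall>x. ((\<lambda>y. - sgn y * (c * H (\<psi> y)) powr ((p-1)/p)) has_real_derivative ((p-1)/p * c * h (\<psi> x))) (at x)"
    using pulse_core[OF z1zp Hd hc _ _ ha Hpos hb k2 d low c p] zp0 by (auto simp: H_def)
  have Hnn: "H (\<psi> x) \<ge> 0" for x
  proof (cases "\<bar>x\<bar> < \<omega>")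
    case True
    then show ?thesis using \<psi>in Hpos[of "\<psi> x"] zp0 by (cases "\<psi> x = zp") (auto simp: H_def less_le)
  next
    case False then show ?thesis using \<psi>out by (simp add: H_def)
  qed
  have dpsi: "deriv \<psi> y = - sgn y * (c * H (\<psi> y)) powr (1/p)" for y
    using D1 DERIV_imp_deriv by blast
  have flux: "(\<lambda>y. \<bar>deriv \<psi> y\<bar> powr (p - 2) * deriv \<psi> y) = (\<lambda>y. - sgn y * (c * H (\<psi> y)) powr ((p-1)/p))"
  proof
    fix y
    have "0 \<le> c * H (\<psi> y)" using c Hnn[of y] by simp
    then show "\<bar>deriv \<psi> y\<bar> powr (p - 2) * deriv \<psi> y = - sgn y * (c * H (\<psi> y)) powr ((p-1)/p)"
      unfolding dpsi by (rule flux_id[OF _ p])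
  qed
  have sol: "is_solution \<theta> p \<epsilon> \<beta> \<psi>"
    unfolding is_solution_def
  proof (intro conjI allI)
    fix x
    show "\<psi> differentiable (at x)" using D1 real_differentiable_def by blast
    have e: "\<epsilon> powr p > 0" using ep by simp
    have "\<epsilon> powr p * ((p-1)/p * c * h (\<psi> x)) - deriv (Gpot \<theta> \<beta>) (\<psi> x) = 0"
      using e p unfolding deriv_Gpot[OF th] c_def h_def by (simp add: field_simps)
    then show "\<exists>D. ((\<lambda>y. \<bar>deriv \<psi> y\<bar> powr (p - 2) * deriv \<psi> y) has_real_derivative D) (at x) \<and>
          \<epsilon> powr p * D - deriv (Gpot \<theta> \<beta>) (\<psi> x) = 0"
      unfolding flux using D2 by blast
  qed
  have max: "\<forall>x. \<psi> x \<le> \<psi> 0"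
  proof
    fix x show "\<psi> x \<le> \<psi> 0" using \<psi>in \<psi>out \<psi>0 z1zp by (cases "\<bar>x\<bar> < \<omega>") auto
  qed
  have dpos: "\<forall>x\<in>{-\<omega><..<0}. deriv \<psi> x > 0"
  proof
    fix x :: real assume x: "x \<in> {-\<omega><..<0}"
    then have "H (\<psi> x) > 0" using \<psi>pos Hpos by auto
    then show "deriv \<psi> x > 0" using x c unfolding dpsi by simp
  qed
  have dneg: "\<forall>x\<in>{0<..<\<omega>}. deriv \<psi> x < 0"
  proof
    fix x :: real assume x: "x \<in> {0<..<\<omega>}"
    then have "H (\<psi> x) > 0" using \<psi>pos Hpos by auto
    then show "deriv \<psi> x < 0" using x c unfolding dpsi by simp
  qed
  show ?thesis
    using sol max \<psi>0 zp0 zp \<omega> \<psi>out dpos dneg unfolding G_def by blast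
qed




lemma solution_neg:
  assumes th: "\<theta> > 1" and sol: "is_solution \<theta> p \<epsilon> (-\<beta>) \<phi>"
  shows "is_solution \<theta> p \<epsilon> \<beta> (\<lambda>x. - \<phi> x)" and "\<And>x. deriv (\<lambda>x. - \<phi> x) x = - deriv \<phi> x"
proof -
  have dif: "\<phi> differentiable (at x)" for x using sol unfolding is_solution_def by blast
  have dphi: "(\<phi> has_real_derivative deriv \<phi> x) (at x)" for x
    using dif DERIV_deriv_iff_real_differentiable by blast
  have dpsi: "((\<lambda>x. - \<phi> x) has_real_derivative - deriv \<phi> x) (at x)" for x
    using DERIV_minus[OF dphi] .
  show dd: "deriv (\<lambda>x. - \<phi> x) x = - deriv \<phi> x" for x using DERIV_imp_deriv[OF dpsi] .
  have flux: "(\<lambda>y. \<bar>deriv (\<lambda>x. - \<phi> x) y\<bar> powr (p - 2) * deriv (\<lambda>x. - \<phi> x) y)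
      = (\<lambda>y. - (\<bar>deriv \<phi> y\<bar> powr (p - 2) * deriv \<phi> y))"
    unfolding dd by simp
  show "is_solution \<theta> p \<epsilon> \<beta> (\<lambda>x. - \<phi> x)"
    unfolding is_solution_def
  proof (intro conjI allI)
    fix x
    show "(\<lambda>x. - \<phi> x) differentiable (at x)" using dpsi real_differentiable_def by blast
    obtain D where D: "((\<lambda>y. \<bar>deriv \<phi> y\<bar> powr (p - 2) * deriv \<phi> y) has_real_derivative D) (at x)"
      "\<epsilon> powr p * D - deriv (Gpot \<theta> (-\<beta>)) (\<phi> x) = 0"
      using sol unfolding is_solution_def by blast
    have "\<epsilon> powr p * (-D) - deriv (Gpot \<theta> \<beta>) (- \<phi> x) = 0"
      using D(2) unfolding deriv_Gpot[OF th] Fd_odd by simp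
    then show "\<exists>D. ((\<lambda>y. \<bar>deriv (\<lambda>x. - \<phi> x) y\<bar> powr (p - 2) * deriv (\<lambda>x. - \<phi> x) y) has_real_derivative D) (at x) \<and>
        \<epsilon> powr p * D - deriv (Gpot \<theta> \<beta>) (- \<phi> x) = 0"
      unfolding flux using DERIV_minus[OF D(1)] by blast
  qed
qed

lemma crit_set: "\<theta> > 1 \<Longrightarrow> {z. deriv (Gpot \<theta> \<beta>) z = 0} = {z. Fd \<theta> z = \<beta>}"
  by (auto simp: deriv_Gpot)

lemma part_i_point:
  assumes th: "\<theta> > 1" and p: "2 < p" and ep: "\<epsilon> > 0" and b: "0 < \<beta>" "\<beta> < Fd \<theta> (u_minus \<theta>)"
  shows "\<exists>\<psi>. (let zm = Min {z. deriv (Gpot \<theta> \<beta>) z = 0} in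
            is_solution \<theta> p \<epsilon> \<beta> \<psi> \<and>
            (\<forall>x. \<psi> x \<le> \<psi> 0) \<and>
            Gpot \<theta> \<beta> (\<psi> 0) = Gpot \<theta> \<beta> zm \<and>
            (\<exists>\<omega>>0. (\<forall>x. \<omega> \<le> \<bar>x\<bar> \<longrightarrow> \<psi> x = zm) \<and>
                    (\<forall>x\<in>{-\<omega><..<0}. deriv \<psi> x > 0) \<and>
                    (\<forall>x\<in>{0<..<\<omega>}. deriv \<psi> x < 0))) \<and>
         u_minus \<theta> < \<psi> 0 \<and> (\<exists>z3. 1 < z3 \<and> Fd \<theta> z3 = \<beta> \<and> \<psi> 0 < z3)"
proof -
  obtain z1 z2 z3 where z: "-1 < z1" "z1 < u_minus \<theta>" "u_minus \<theta> < z2" "z2 < 0" "1 < z3"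
    "Fd \<theta> z1 = \<beta>" "Fd \<theta> z2 = \<beta>" "Fd \<theta> z3 = \<beta>"
    and set: "{z. Fd \<theta> z = \<beta>} = {z1, z2, z3}"
    and s1: "\<And>s. z1 < s \<Longrightarrow> s < z2 \<Longrightarrow> Fd \<theta> s > \<beta>"
    and s2: "\<And>s. z2 < s \<Longrightarrow> s < z3 \<Longrightarrow> Fd \<theta> s < \<beta>"
    by (rule roots[OF th b]) blast
  have Min: "Min {z. deriv (Gpot \<theta> \<beta>) z = 0} = z1"
    unfolding crit_set[OF th] set using z by (simp add: min_def)
  obtain \<psi> where \<psi>: "is_solution \<theta> p \<epsilon> \<beta> \<psi>" "\<forall>x. \<psi> x \<le> \<psi> 0" "Gpot \<theta> \<beta> (\<psi> 0) = Gpot \<theta> \<beta> z1"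
     "z2 < \<psi> 0" "\<psi> 0 < z3"
     "\<exists>\<omega>>0. (\<forall>x. \<omega> \<le> \<bar>x\<bar> \<longrightarrow> \<psi> x = z1) \<and> (\<forall>x\<in>{-\<omega><..<0}. deriv \<psi> x > 0) \<and>
        (\<forall>x\<in>{0<..<\<omega>}. deriv \<psi> x < 0)"
    using pulse_i[OF th p ep b(1) z s1 s2] by blast
  show ?thesis
  proof -
    have um: "u_minus \<theta> < \<psi> 0" using \<psi>(4) z(3) by linarith
    have e3: "\<exists>z3'. 1 < z3' \<and> Fd \<theta> z3' = \<beta> \<and> \<psi> 0 < z3'" using z \<psi> by blast
    show ?thesis unfolding Let_def Min using \<psi>(1,2,3,6) um e3 by blast
  qed
qed

lemma zmin_facts:
  assumes th: "\<theta> > 1" and b: "0 < \<beta>" "\<beta> < Fd \<theta> (u_minus \<theta>)"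
  shows "-1 < Min {z. deriv (Gpot \<theta> \<beta>) z = 0} \<and> Min {z. deriv (Gpot \<theta> \<beta>) z = 0} < u_minus \<theta>
     \<and> Fd \<theta> (Min {z. deriv (Gpot \<theta> \<beta>) z = 0}) = \<beta>"
proof -
  obtain z1 z2 z3 where z: "-1 < z1" "z1 < u_minus \<theta>" "u_minus \<theta> < z2" "z2 < 0" "1 < z3"
    "Fd \<theta> z1 = \<beta>" "Fd \<theta> z2 = \<beta>" "Fd \<theta> z3 = \<beta>"
    and set: "{z. Fd \<theta> z = \<beta>} = {z1, z2, z3}"
    and s1: "\<And>s. z1 < s \<Longrightarrow> s < z2 \<Longrightarrow> Fd \<theta> s > \<beta>"
    and s2: "\<And>s. z2 < s \<Longrightarrow> s < z3 \<Longrightarrow> Fd \<theta> s < \<beta>"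
    by (rule roots[OF th b]) blast
  have Min: "Min {z. deriv (Gpot \<theta> \<beta>) z = 0} = z1"
    unfolding crit_set[OF th] set using z by (simp add: min_def)
  show ?thesis using z Min by simp
qed




lemma ev_right_lt: "b > 0 \<Longrightarrow> eventually (\<lambda>\<beta>::real. 0 < \<beta> \<and> \<beta> < b) (at_right 0)"
  unfolding eventually_at_right_field by (rule exI[of _ b]) auto

lemma zmin_lim:
  assumes th: "\<theta> > 1"
  shows "((\<lambda>\<beta>. Min {z. deriv (Gpot \<theta> \<beta>) z = 0}) \<longlongrightarrow> -1) (at_right 0)"
  unfolding tendsto_iff
proof (intro allI impI)
  fix e :: real assume e: "e > 0"
  define um where "um = u_minus \<theta>"
  have um: "-1 < um" "um < 0" using um_facts[OF th] by (auto simp: um_def)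
  define w where "w = -1 + min e ((um + 1)/2)"
  have w: "-1 < w" "w < um" "w \<le> -1 + e" using e um by (auto simp: w_def min_def field_simps)
  have Fw: "0 < Fd \<theta> w" using Fd_incr[OF th, of "-1" w] w um Fd_special by (simp add: um_def)
  have Fwu: "Fd \<theta> w < Fd \<theta> um" using Fd_incr[OF th, of w um] w by (simp add: um_def)
  show "\<forall>\<^sub>F \<beta> in at_right 0. dist (Min {z. deriv (Gpot \<theta> \<beta>) z = 0}) (-1) < e"
    using ev_right_lt[OF Fw]
  proof (rule eventually_mono)
    fix \<beta> assume b: "0 < \<beta> \<and> \<beta> < Fd \<theta> w"
    define zm where "zm = Min {z. deriv (Gpot \<theta> \<beta>) z = 0}"
    have zm: "-1 < zm" "zm < um" "Fd \<theta> zm = \<beta>"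
      using zmin_facts[OF th, of \<beta>] b Fwu by (auto simp: zm_def um_def)
    have "zm < w"
    proof (rule ccontr)
      assume "\<not> zm < w"
      then have "Fd \<theta> w \<le> Fd \<theta> zm" using Fd_incr[OF th, of w zm] w zm by (cases "w = zm") (auto simp: um_def)
      then show False using zm b by simp
    qed
    then show "dist (Min {z. deriv (Gpot \<theta> \<beta>) z = 0}) (-1) < e"
      using zm w unfolding zm_def[symmetric] dist_real_def by auto
  qed
qed

lemma Fpot_cont: "\<theta> > 1 \<Longrightarrow> continuous_on S (Fpot \<theta>)"
  using Fpot_deriv by (meson DERIV_isCont continuous_at_imp_continuous_on)

lemma psi0_lim:
  fixes Y :: "real \<Rightarrow> real"
  assumes th: "\<theta> > 1"
    and Y: "\<And>\<beta>. 0 < \<beta> \<Longrightarrow> \<beta> < Fd \<theta> (u_minus \<theta>) \<Longrightarrow>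
       u_minus \<theta> < Y \<beta> \<and> (\<exists>z3. 1 < z3 \<and> Fd \<theta> z3 = \<beta> \<and> Y \<beta> < z3) \<and>
       Gpot \<theta> \<beta> (Y \<beta>) = Gpot \<theta> \<beta> (Min {z. deriv (Gpot \<theta> \<beta>) z = 0})"
  shows "(Y \<longlongrightarrow> 1) (at_right 0)"
  unfolding tendsto_iff
proof (intro allI impI)
  fix e :: real assume e: "e > 0"
  define um where "um = u_minus \<theta>"
  have um: "-1 < um" "um < 0" using um_facts[OF th] by (auto simp: um_def)
  define e' where "e' = min e (1/2)"
  have e': "0 < e'" "e' \<le> e" "e' \<le> 1/2" using e by (auto simp: e'_def)
  have Fum: "0 < Fd \<theta> um" using Fd_incr[OF th, of "-1" um] um Fd_special by (simp add: um_def)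
  have F1e: "0 < Fd \<theta> (1 + e')" using Fd_incr_out[OF th, of 1 "1 + e'"] e' Fd_special by simp
  obtain t0 where t0: "t0 \<in> {um..1-e'}" "\<And>t. t \<in> {um..1-e'} \<Longrightarrow> Fpot \<theta> t0 \<le> Fpot \<theta> t"
  proof -
    have "{um..1-e'} \<noteq> {}" using um e' by simp
    then show ?thesis using continuous_attains_inf[OF compact_Icc _ Fpot_cont[OF th]] that by blast
  qed
  define \<mu> where "\<mu> = Fpot \<theta> t0"
  have \<mu>: "\<mu> > 0"
  proof -
    have "\<bar>t0\<bar> < 1" using t0(1) um e' by auto
    then have "t0\<^sup>2 < 1" by (simp add: abs_square_less_1)
    then have "1 - t0\<^sup>2 \<noteq> 0" by simp
    then show ?thesis using th by (simp add: \<mu>_def Fpot_def)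
  qed
  have "((\<lambda>\<beta>. Fpot \<theta> (Min {z. deriv (Gpot \<theta> \<beta>) z = 0})) \<longlongrightarrow> Fpot \<theta> (-1)) (at_right 0)"
  proof (rule isCont_tendsto_compose[OF _ zmin_lim[OF th]])
    show "isCont (Fpot \<theta>) (-1)" using Fpot_deriv[OF th] by (rule DERIV_isCont)
  qed
  then have ev1: "eventually (\<lambda>\<beta>. Fpot \<theta> (Min {z. deriv (Gpot \<theta> \<beta>) z = 0}) < \<mu>/2) (at_right 0)"
    using \<mu> by (intro order_tendstoD(2)) (auto simp: Fpot_def)
  have m4: "0 < min (\<mu>/4) (min (Fd \<theta> um) (Fd \<theta> (1 + e')))" using \<mu> Fum F1e by simp
  show "\<forall>\<^sub>F \<beta> in at_right 0. dist (Y \<beta>) 1 < e"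
    using eventually_conj[OF ev1 ev_right_lt[OF m4]]
  proof (rule eventually_mono)
    fix \<beta> assume b: "Fpot \<theta> (Min {z. deriv (Gpot \<theta> \<beta>) z = 0}) < \<mu>/2 \<and>
      0 < \<beta> \<and> \<beta> < min (\<mu>/4) (min (Fd \<theta> um) (Fd \<theta> (1 + e')))"
    define z1 where "z1 = Min {z. deriv (Gpot \<theta> \<beta>) z = 0}"
    have b': "0 < \<beta>" "\<beta> < Fd \<theta> (u_minus \<theta>)" "\<beta> < \<mu>/4" "\<beta> < Fd \<theta> (1 + e')" "Fpot \<theta> z1 < \<mu>/2"
      using b by (auto simp: um_def z1_def)
    have z1: "-1 < z1" "z1 < um" using zmin_facts[OF th b'(1,2)] by (auto simp: z1_def um_def)
    obtain z3 where z3: "1 < z3" "Fd \<theta> z3 = \<beta>" "Y \<beta> < z3"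
      and yu: "um < Y \<beta>" and G: "Gpot \<theta> \<beta> (Y \<beta>) = Gpot \<theta> \<beta> z1"
      using Y[OF b'(1,2)] unfolding z1_def um_def by blast
    have up: "z3 < 1 + e'"
    proof (rule ccontr)
      assume "\<not> z3 < 1 + e'"
      then have "Fd \<theta> (1 + e') \<le> Fd \<theta> z3" using Fd_incr_out[OF th, of "1 + e'" z3] e'
        by (cases "z3 = 1 + e'") auto
      then show False using z3 b' by simp
    qed
    have low: "1 - e' < Y \<beta>"
    proof (rule ccontr)
      assume "\<not> 1 - e' < Y \<beta>"
      then have "Y \<beta> \<in> {um..1-e'}" using yu by auto
      then have "\<mu> \<le> Fpot \<theta> (Y \<beta>)" using t0(2) \<mu>_def by blast
      moreover have "Fpot \<theta> (Y \<beta>) = Fpot \<theta> z1 + \<beta> * (Y \<beta> - z1)"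
        using G by (simp add: Gpot_def algebra_simps)
      moreover have "\<beta> * (Y \<beta> - z1) \<le> \<beta> * 2"
        using \<open>Y \<beta> \<in> {um..1-e'}\<close> z1 e' b' by (intro mult_left_mono) auto
      ultimately show False using b' by linarith
    qed
    show "dist (Y \<beta>) 1 < e" using up low z3 e' unfolding dist_real_def by auto
  qed
qed




lemma Gpot_neg: "Gpot \<theta> \<beta> (- u) = Gpot \<theta> (- \<beta>) u"
  by (simp add: Gpot_def Fpot_even)

lemma part_ii_point:
  assumes th: "\<theta> > 1" and p: "2 < p" and ep: "\<epsilon> > 0"
    and b: "deriv (Fpot \<theta>) (u_plus \<theta>) < \<beta>" "\<beta> < 0"
  shows "let zp = Max {z. deriv (Gpot \<theta> \<beta>) z = 0} in
         \<exists>\<psi>. is_solution \<theta> p \<epsilon> \<beta> \<psi> \<and>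
            (\<forall>x. \<psi> 0 \<le> \<psi> x) \<and>
            Gpot \<theta> \<beta> (\<psi> 0) = Gpot \<theta> \<beta> zp \<and>
            (\<exists>\<omega>>0. (\<forall>x. \<omega> \<le> \<bar>x\<bar> \<longrightarrow> \<psi> x = zp) \<and>
                    (\<forall>x\<in>{-\<omega><..<0}. deriv \<psi> x < 0) \<and>
                    (\<forall>x\<in>{0<..<\<omega>}. deriv \<psi> x > 0))"
proof -
  have "deriv (Fpot \<theta>) (u_plus \<theta>) = - Fd \<theta> (u_minus \<theta>)"
    using deriv_Fpot[OF th] um_facts(4)[OF th] Fd_odd by simp
  then have nb: "0 < - \<beta>" "- \<beta> < Fd \<theta> (u_minus \<theta>)" using b by auto
  obtain z1 z2 z3 where z: "-1 < z1" "z1 < u_minus \<theta>" "u_minus \<theta> < z2" "z2 < 0" "1 < z3"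
    "Fd \<theta> z1 = - \<beta>" "Fd \<theta> z2 = - \<beta>" "Fd \<theta> z3 = - \<beta>"
    and set: "{z. Fd \<theta> z = - \<beta>} = {z1, z2, z3}"
    and s1: "\<And>s. z1 < s \<Longrightarrow> s < z2 \<Longrightarrow> Fd \<theta> s > - \<beta>"
    and s2: "\<And>s. z2 < s \<Longrightarrow> s < z3 \<Longrightarrow> Fd \<theta> s < - \<beta>"
    by (rule roots[OF th nb]) blast
  have "{z. deriv (Gpot \<theta> \<beta>) z = 0} = {z. - z \<in> {z. Fd \<theta> z = - \<beta>}}"
    unfolding crit_set[OF th] by (auto simp: Fd_odd)
  also have "\<dots> = {- z1, - z2, - z3}" unfolding set by auto
  finally have Max: "Max {z. deriv (Gpot \<theta> \<beta>) z = 0} = - z1" using z by (simp add: max_def)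
  obtain \<phi> where \<phi>: "is_solution \<theta> p \<epsilon> (- \<beta>) \<phi>" "\<forall>x. \<phi> x \<le> \<phi> 0" "Gpot \<theta> (- \<beta>) (\<phi> 0) = Gpot \<theta> (- \<beta>) z1"
     and \<omega>: "\<exists>\<omega>>0. (\<forall>x. \<omega> \<le> \<bar>x\<bar> \<longrightarrow> \<phi> x = z1) \<and> (\<forall>x\<in>{-\<omega><..<0}. deriv \<phi> x > 0) \<and>
        (\<forall>x\<in>{0<..<\<omega>}. deriv \<phi> x < 0)"
    using pulse_i[OF th p ep nb(1) z s1 s2] by blast
  define \<psi> where "\<psi> = (\<lambda>x. - \<phi> x)"
  have sol: "is_solution \<theta> p \<epsilon> \<beta> \<psi>" unfolding \<psi>_def by (rule solution_neg(1)[OF th \<phi>(1)])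
  have dd: "deriv \<psi> x = - deriv \<phi> x" for x unfolding \<psi>_def by (rule solution_neg(2)[OF th \<phi>(1)])
  have min: "\<forall>x. \<psi> 0 \<le> \<psi> x" using \<phi>(2) by (simp add: \<psi>_def)
  have G: "Gpot \<theta> \<beta> (\<psi> 0) = Gpot \<theta> \<beta> (- z1)" using \<phi>(3) by (simp add: \<psi>_def Gpot_neg)
  obtain \<omega> where w: "\<omega> > 0" "\<forall>x. \<omega> \<le> \<bar>x\<bar> \<longrightarrow> \<phi> x = z1" "\<forall>x\<in>{-\<omega><..<0}. deriv \<phi> x > 0"
      "\<forall>x\<in>{0<..<\<omega>}. deriv \<phi> x < 0" using \<omega> by blast
  have w': "(\<forall>x. \<omega> \<le> \<bar>x\<bar> \<longrightarrow> \<psi> x = - z1) \<and> (\<forall>x\<in>{-\<omega><..<0}. deriv \<psi> x < 0) \<and>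
        (\<forall>x\<in>{0<..<\<omega>}. deriv \<psi> x > 0)" using w by (simp add: \<psi>_def[symmetric] dd) (simp add: \<psi>_def)
  show ?thesis unfolding Let_def Max using sol min G w(1) w' by blast
qed

theorem proposition2p2:
  fixes \<theta> p \<epsilon> :: real
  assumes "\<theta> > 1" and "p > 1" and "\<epsilon> > 0"
    and "2 < p" and "p \<le> \<theta>"
  shows
   "(\<exists>\<Psi> :: real \<Rightarrow> real \<Rightarrow> real.
      (\<forall>\<beta>. 0 < \<beta> \<and> \<beta> < deriv (Fpot \<theta>) (u_minus \<theta>) \<longrightarrow>
         (let zm = Min {z. deriv (Gpot \<theta> \<beta>) z = 0} in
            is_solution \<theta> p \<epsilon> \<beta> (\<Psi> \<beta>) \<and>
            (\<forall>x. \<Psi> \<beta> x \<le> \<Psi> \<beta> 0) \<and>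
            Gpot \<theta> \<beta> (\<Psi> \<beta> 0) = Gpot \<theta> \<beta> zm \<and>
            (\<exists>\<omega>>0. (\<forall>x. \<omega> \<le> \<bar>x\<bar> \<longrightarrow> \<Psi> \<beta> x = zm) \<and>
                    (\<forall>x\<in>{-\<omega><..<0}. deriv (\<Psi> \<beta>) x > 0) \<and>
                    (\<forall>x\<in>{0<..<\<omega>}. deriv (\<Psi> \<beta>) x < 0)))) \<and>
      ((\<lambda>\<beta>. \<Psi> \<beta> 0) \<longlongrightarrow> 1) (at_right 0) \<and>
      ((\<lambda>\<beta>. Min {z. deriv (Gpot \<theta> \<beta>) z = 0}) \<longlongrightarrow> -1) (at_right 0))
    \<and>
    (\<forall>\<beta>. deriv (Fpot \<theta>) (u_plus \<theta>) < \<beta> \<and> \<beta> < 0 \<longrightarrow>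
       (let zp = Max {z. deriv (Gpot \<theta> \<beta>) z = 0} in
         \<exists>\<psi>. is_solution \<theta> p \<epsilon> \<beta> \<psi> \<and>
            (\<forall>x. \<psi> 0 \<le> \<psi> x) \<and>
            Gpot \<theta> \<beta> (\<psi> 0) = Gpot \<theta> \<beta> zp \<and>
            (\<exists>\<omega>>0. (\<forall>x. \<omega> \<le> \<bar>x\<bar> \<longrightarrow> \<psi> x = zp) \<and>
                    (\<forall>x\<in>{-\<omega><..<0}. deriv \<psi> x < 0) \<and>
                    (\<forall>x\<in>{0<..<\<omega>}. deriv \<psi> x > 0))))"
proof -
  have th: "\<theta> > 1" and p: "2 < p" and ep: "\<epsilon> > 0" using assms by auto
  have dum: "deriv (Fpot \<theta>) (u_minus \<theta>) = Fd \<theta> (u_minus \<theta>)" by (rule deriv_Fpot[OF th])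
  define Q where "Q = (\<lambda>\<beta> \<psi>. (let zm = Min {z. deriv (Gpot \<theta> \<beta>) z = 0} in
            is_solution \<theta> p \<epsilon> \<beta> \<psi> \<and>
            (\<forall>x. \<psi> x \<le> \<psi> 0) \<and>
            Gpot \<theta> \<beta> (\<psi> 0) = Gpot \<theta> \<beta> zm \<and>
            (\<exists>\<omega>>0. (\<forall>x. \<omega> \<le> \<bar>x\<bar> \<longrightarrow> \<psi> x = zm) \<and>
                    (\<forall>x\<in>{-\<omega><..<0}. deriv \<psi> x > 0) \<and>
                    (\<forall>x\<in>{0<..<\<omega>}. deriv \<psi> x < 0))) \<and>
         u_minus \<theta> < \<psi> 0 \<and> (\<exists>z3. 1 < z3 \<and> Fd \<theta> z3 = \<beta> \<and> \<psi> 0 < z3))"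
  define \<Psi> where "\<Psi> = (\<lambda>\<beta>. SOME \<psi>. Q \<beta> \<psi>)"
  have Q: "Q \<beta> (\<Psi> \<beta>)" if "0 < \<beta>" "\<beta> < Fd \<theta> (u_minus \<theta>)" for \<beta>
  proof -
    have ex: "\<exists>\<psi>. Q \<beta> \<psi>" using part_i_point[OF th p ep that] unfolding Q_def .
    show ?thesis unfolding \<Psi>_def by (rule someI_ex[OF ex])
  qed
  have part1: "\<forall>\<beta>. 0 < \<beta> \<and> \<beta> < deriv (Fpot \<theta>) (u_minus \<theta>) \<longrightarrow>
         (let zm = Min {z. deriv (Gpot \<theta> \<beta>) z = 0} in
            is_solution \<theta> p \<epsilon> \<beta> (\<Psi> \<beta>) \<and>
            (\<forall>x. \<Psi> \<beta> x \<le> \<Psi> \<beta> 0) \<and>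
            Gpot \<theta> \<beta> (\<Psi> \<beta> 0) = Gpot \<theta> \<beta> zm \<and>
            (\<exists>\<omega>>0. (\<forall>x. \<omega> \<le> \<bar>x\<bar> \<longrightarrow> \<Psi> \<beta> x = zm) \<and>
                    (\<forall>x\<in>{-\<omega><..<0}. deriv (\<Psi> \<beta>) x > 0) \<and>
                    (\<forall>x\<in>{0<..<\<omega>}. deriv (\<Psi> \<beta>) x < 0)))"
    using Q unfolding dum Q_def by blast
  have lim1: "((\<lambda>\<beta>. \<Psi> \<beta> 0) \<longlongrightarrow> 1) (at_right 0)"
  proof (rule psi0_lim[OF th])
    fix \<beta> :: real assume b: "0 < \<beta>" "\<beta> < Fd \<theta> (u_minus \<theta>)"
    show "u_minus \<theta> < \<Psi> \<beta> 0 \<and> (\<exists>z3>1. Fd \<theta> z3 = \<beta> \<and> \<Psi> \<beta> 0 < z3) \<and>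
       Gpot \<theta> \<beta> (\<Psi> \<beta> 0) = Gpot \<theta> \<beta> (Min {z. deriv (Gpot \<theta> \<beta>) z = 0})"
      using Q[OF b] unfolding Q_def Let_def by blast
  qed
  have part2: "\<forall>\<beta>. deriv (Fpot \<theta>) (u_plus \<theta>) < \<beta> \<and> \<beta> < 0 \<longrightarrow>
       (let zp = Max {z. deriv (Gpot \<theta> \<beta>) z = 0} in
         \<exists>\<psi>. is_solution \<theta> p \<epsilon> \<beta> \<psi> \<and>
            (\<forall>x. \<psi> 0 \<le> \<psi> x) \<and>
            Gpot \<theta> \<beta> (\<psi> 0) = Gpot \<theta> \<beta> zp \<and>
            (\<exists>\<omega>>0. (\<forall>x. \<omega> \<le> \<bar>x\<bar> \<longrightarrow> \<psi> x = zp) \<and>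
                    (\<forall>x\<in>{-\<omega><..<0}. deriv \<psi> x < 0) \<and>
                    (\<forall>x\<in>{0<..<\<omega>}. deriv \<psi> x > 0)))"
    using part_ii_point[OF th p ep] by blast
  show ?thesis using part1 lim1 zmin_lim[OF th] part2 by blast
qed


end
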